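(* In an $m$-partial SCS the number of robots in a given ring remains invariant over time. If the length of a ring is $2l\pi$ (with $l$ a positive integer), then it contains at most $l$ robots. Furthermore, in an SCS from which no robot has left, a ring of length $2l\pi$ contains exactly $l$ robots, each at distance $2\pi$ (along the ring) from the next.
   Context: Let $T=\{C_1,\dots,C_n\}$ be pairwise disjoint unit circles in the plane (trajectories) and $\epsilon<0.5$ a communication range. The graph of potential links $G_\epsilon(T)$ has the circle centers as nodes and an edge $\{i,j\}$ whenever the centers of $C_i,C_j$ are at distance at most $2+\epsilon$; it is assumed connected. Points of a circle are identified with angles (modulo $2\pi$), and a robot traverses a circle in one time unit. A schedule is a pair $(f,g)$, $f:T\to[0,2\pi)$, $g:T\to\{-1,1\}$ ($1$ = counterclockwise); the robot on $C_i$ is at angle $f(C_i)+2\pi g(C_i)t$ at time $t$. A communication graph $G=(V,E)$ is a connected spanning subgraph of $G_\epsilon(T)$. The link position $\phi_{ij}$ is the point of $C_i$ closest to $C_j$. A schedule is $G$-synchronized if for every $\{i,j\}\in E$ the robot on $C_i$ is at $\phi_{ij}$ exactly when the robot on $C_j$ is at $\phi_{ji}$. An SCS with communication graph $G$ consists of $n$ robots, one per circle, moving under a $G$-synchronized schedule with $g(C_i)=-g(C_j)$ for all $\{i,j\}\in E$. Shifting protocol: when a robot on $C_i$ reaches $\phi_{ij}$ and there is no robot at $\phi_{ji}$, it moves to $C_j$ and thereafter follows the schedule of $C_j$. An $m$-partial SCS is obtained by removing $n-m$ robots, the remaining $m$ applying the shifting protocol. A ring is the closed path (locus of points) traversed by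 a robot that follows the assigned direction on each circle and always shifts to the neighboring circle at link positions; rings are pairwise disjoint and each arc of a circle between consecutive link positions lies in exactly one ring. The length of a ring or of a path along it is the total length of the circle arcs traversed (ignoring transitions between circles); ring lengths are positive integer multiples of $2\pi$. A robot is in a ring if its current position lies on that ring. *)

theory Defs
  imports "HOL-Analysis.Analysis"
begin

text \<open>Circles C_i (i < n) are the unit circles sphere (c i) 1 in the complex plane.
Angles are reals, compared modulo 2 pi.\<close>

definition angeq :: "real \<Rightarrow> real \<Rightarrow> bool" where
  "angeq a b \<longleftrightarrow> (\<exists>k::int. a - b = 2 * pi * of_int k)"

definition nang :: "real \<Rightarrow> real" where
  "nang a = a - 2 * pi * of_int \<lfloor>a / (2 * pi)\<rfloor>"

text \<open>angle of the robot following the schedule (f,g) of circle i at time t\<close>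
definition sched :: "(nat \<Rightarrow> real) \<Rightarrow> (nat \<Rightarrow> real) \<Rightarrow> nat \<Rightarrow> real \<Rightarrow> real" where
  "sched f g i t = f i + 2 * pi * g i * t"

text \<open>link position phi_ij: angle on C_i of the point of C_i closest to C_j\<close>
definition linkpos :: "(nat \<Rightarrow> complex) \<Rightarrow> nat \<Rightarrow> nat \<Rightarrow> real" where
  "linkpos c i j = Arg (c j - c i)"

definition potential_links :: "(nat \<Rightarrow> complex) \<Rightarrow> nat \<Rightarrow> real \<Rightarrow> (nat \<times> nat) set" where
  "potential_links c n eps =
     {(i, j). i < n \<and> j < n \<and> i \<noteq> j \<and> dist (c i) (c j) \<le> 2 + eps}"

definition connected_on :: "nat \<Rightarrow> (nat \<times> nat) set \<Rightarrow> bool" where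
  "connected_on n E \<longleftrightarrow> (\<forall>i<n. \<forall>j<n. (i, j) \<in> E\<^sup>*)"

text \<open>Standing setting of an SCS: disjoint unit circles, communication range eps < 0.5,
connected G_eps(T), communication graph E (connected spanning subgraph, edges stored
symmetrically), G-synchronized schedule (f,g) with opposite directions along edges.\<close>
definition SCS_setting ::
  "(nat \<Rightarrow> complex) \<Rightarrow> nat \<Rightarrow> real \<Rightarrow> (nat \<times> nat) set \<Rightarrow> (nat \<Rightarrow> real) \<Rightarrow> (nat \<Rightarrow> real) \<Rightarrow> bool"
where
  "SCS_setting c n eps E f g \<longleftrightarrow>
     (\<forall>i<n. \<forall>j<n. i \<noteq> j \<longrightarrow> sphere (c i) 1 \<inter> sphere (c j) 1 = {}) \<and>
     eps < 1/2 \<and>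
     connected_on n (potential_links c n eps) \<and>
     E \<subseteq> potential_links c n eps \<and> sym E \<and> connected_on n E \<and>
     (\<forall>i<n. 0 \<le> f i \<and> f i < 2 * pi \<and> (g i = 1 \<or> g i = -1)) \<and>
     (\<forall>(i, j)\<in>E. \<forall>t. angeq (sched f g i t) (linkpos c i j) \<longleftrightarrow>
                       angeq (sched f g j t) (linkpos c j i)) \<and>
     (\<forall>(i, j)\<in>E. g i = - g j)"

definition left_const :: "(real \<Rightarrow> nat) \<Rightarrow> real \<Rightarrow> nat \<Rightarrow> bool" where
  "left_const x t i \<longleftrightarrow> (\<exists>\<delta>>0. \<forall>s. t - \<delta> < s \<and> s < t \<longrightarrow> x s = i)"

definition right_const :: "(real \<Rightarrow> nat) \<Rightarrow> real \<Rightarrow> bool" where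
  "right_const x t \<longleftrightarrow> (\<exists>\<delta>>0. \<forall>s. t \<le> s \<and> s < t + \<delta> \<longrightarrow> x s = x t)"

definition prior :: "(nat \<Rightarrow> nat) \<Rightarrow> (nat \<Rightarrow> real \<Rightarrow> nat) \<Rightarrow> nat \<Rightarrow> real \<Rightarrow> nat \<Rightarrow> bool" where
  "prior init pos r t i \<longleftrightarrow> (t = 0 \<and> i = init r) \<or> (t > 0 \<and> left_const (pos r) t i)"

definition may_shift ::
  "(nat \<Rightarrow> complex) \<Rightarrow> (nat \<times> nat) set \<Rightarrow> (nat \<Rightarrow> real) \<Rightarrow> (nat \<Rightarrow> real) \<Rightarrow>
   nat set \<Rightarrow> (nat \<Rightarrow> nat) \<Rightarrow> (nat \<Rightarrow> real \<Rightarrow> nat) \<Rightarrow> real \<Rightarrow> nat \<Rightarrow> nat \<Rightarrow> bool"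
where
  "may_shift c E f g R init pos t i j \<longleftrightarrow>
     (i, j) \<in> E \<and> angeq (sched f g i t) (linkpos c i j) \<and>
     \<not> (\<exists>r'\<in>R. prior init pos r' t j \<and> angeq (sched f g j t) (linkpos c j i))"

text \<open>A partial SCS: the robots R (finitely many, initially on distinct circles, i.e. an SCS
from which some robots were removed at time 0) move following the schedule of their current
circle, pos r t being the circle of robot r at time t >= 0 (after any shift at time t),
and apply the shifting protocol.\<close>
definition partial_SCS_run ::
  "(nat \<Rightarrow> complex) \<Rightarrow> nat \<Rightarrow> (nat \<times> nat) set \<Rightarrow> (nat \<Rightarrow> real) \<Rightarrow> (nat \<Rightarrow> real) \<Rightarrow>
   nat set \<Rightarrow> (nat \<Rightarrow> nat) \<Rightarrow> (nat \<Rightarrow> real \<Rightarrow> nat) \<Rightarrow> bool"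
where
  "partial_SCS_run c n E f g R init pos \<longleftrightarrow>
     finite R \<and> inj_on init R \<and> init ` R \<subseteq> {..<n} \<and>
     (\<forall>r\<in>R. \<forall>t\<ge>0. pos r t < n \<and> right_const (pos r) t) \<and>
     (\<forall>r\<in>R. \<forall>t>0. \<exists>i. left_const (pos r) t i) \<and>
     (\<forall>r\<in>R. \<forall>t\<ge>0. \<forall>i. prior init pos r t i \<longrightarrow>
        ((\<exists>j. may_shift c E f g R init pos t i j) \<longrightarrow> may_shift c E f g R init pos t i (pos r t)) \<and>
        ((\<not> (\<exists>j. may_shift c E f g R init pos t i j)) \<longrightarrow> pos r t = i))"

definition pt :: "(nat \<Rightarrow> real) \<Rightarrow> (nat \<Rightarrow> real) \<Rightarrow> nat \<Rightarrow> real \<Rightarrow> nat \<times> real" where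
  "pt f g i t = (i, nang (sched f g i t))"

text \<open>A robot that always shifts at link positions, starting at time t0 on circle i0
(at the schedule position of C_i0; every point of C_i0 is such a position at some time).\<close>
definition shift_run ::
  "(nat \<Rightarrow> complex) \<Rightarrow> nat \<Rightarrow> (nat \<times> nat) set \<Rightarrow> (nat \<Rightarrow> real) \<Rightarrow> (nat \<Rightarrow> real) \<Rightarrow>
   (real \<Rightarrow> nat) \<Rightarrow> real \<Rightarrow> nat \<Rightarrow> bool"
where
  "shift_run c n E f g x t0 i0 \<longleftrightarrow>
     x t0 = i0 \<and>
     (\<forall>t\<ge>t0. x t < n \<and> right_const x t) \<and>
     (\<forall>t>t0. \<exists>i. left_const x t i) \<and>
     (\<forall>t>t0. \<forall>i. left_const x t i \<longrightarrow>
        ((\<exists>j. (i, j) \<in> E \<and> angeq (sched f g i t) (linkpos c i j)) \<longrightarrow>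
            (i, x t) \<in> E \<and> angeq (sched f g i t) (linkpos c i (x t))) \<and>
        ((\<not> (\<exists>j. (i, j) \<in> E \<and> angeq (sched f g i t) (linkpos c i j))) \<longrightarrow> x t = i))"

definition orbit :: "(nat \<Rightarrow> real) \<Rightarrow> (nat \<Rightarrow> real) \<Rightarrow> (real \<Rightarrow> nat) \<Rightarrow> real \<Rightarrow> (nat \<times> real) set" where
  "orbit f g x t0 = {pt f g (x t) t | t. t \<ge> t0}"

definition is_ring ::
  "(nat \<Rightarrow> complex) \<Rightarrow> nat \<Rightarrow> (nat \<times> nat) set \<Rightarrow> (nat \<Rightarrow> real) \<Rightarrow> (nat \<Rightarrow> real) \<Rightarrow>
   (nat \<times> real) set \<Rightarrow> bool"
where
  "is_ring c n E f g P \<longleftrightarrow>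
     (\<exists>i<n. \<exists>t0 x. shift_run c n E f g x t0 i \<and> P = orbit f g x t0)"

text \<open>Length of a ring: arc length (2 pi per time unit) traversed until first return.\<close>
definition ring_length ::
  "(nat \<Rightarrow> complex) \<Rightarrow> nat \<Rightarrow> (nat \<times> nat) set \<Rightarrow> (nat \<Rightarrow> real) \<Rightarrow> (nat \<Rightarrow> real) \<Rightarrow>
   (nat \<times> real) set \<Rightarrow> real \<Rightarrow> bool"
where
  "ring_length c n E f g P L \<longleftrightarrow>
     (\<exists>i<n. \<exists>t0 x T. shift_run c n E f g x t0 i \<and> P = orbit f g x t0 \<and> T > 0 \<and>
        pt f g (x (t0 + T)) (t0 + T) = pt f g i t0 \<and>
        (\<forall>s. 0 < s \<and> s < T \<longrightarrow> pt f g (x (t0 + s)) (t0 + s) \<noteq> pt f g i t0) \<and>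
        L = 2 * pi * T)"

definition robots_in ::
  "(nat \<Rightarrow> real) \<Rightarrow> (nat \<Rightarrow> real) \<Rightarrow> nat set \<Rightarrow> (nat \<Rightarrow> real \<Rightarrow> nat) \<Rightarrow>
   (nat \<times> real) set \<Rightarrow> real \<Rightarrow> nat set"
where
  "robots_in f g R pos P t = {r \<in> R. pt f g (pos r t) t \<in> P}"

definition robot_points ::
  "(nat \<Rightarrow> real) \<Rightarrow> (nat \<Rightarrow> real) \<Rightarrow> nat set \<Rightarrow> (nat \<Rightarrow> real \<Rightarrow> nat) \<Rightarrow> real \<Rightarrow> (nat \<times> real) set"
where
  "robot_points f g R pos t = {pt f g (pos r t) t | r. r \<in> R}"

end

theory Submission
  imports Defs "HOL-Analysis.Analysis"
begin

lemma spheres_meet: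
  fixes p q :: complex
  assumes "dist p q \<le> 2"
  shows "sphere p 1 \<inter> sphere q 1 \<noteq> {}"
proof (cases "p = q")
  case True
  then have "p + 1 \<in> sphere p 1 \<inter> sphere q 1" by (simp add: dist_norm)
  then show ?thesis by blast
next
  case False
  define w where "w = q - p"
  define d where "d = norm w"
  have d0: "d > 0" using False by (simp add: d_def w_def)
  have d2: "d \<le> 2" using assms by (simp add: d_def w_def dist_norm norm_minus_commute)
  define h where "h = sqrt (1 - d^2/4)"
  have hh: "h^2 = 1 - d^2/4" unfolding h_def using d2 d0
    by (subst real_sqrt_pow2) (auto simp: power2_eq_square intro!: mult_mono[of d 2 d 2, simplified])
  define u where "u = w / of_real d"
  have nu: "norm u = 1" using d0 by (simp add: u_def d_def norm_divide)
  define z where "z = p + u * Complex (d/2) h"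
  have wu: "w = u * of_real d" using d0 by (simp add: u_def)
  have n1: "norm (Complex (d/2) h) = 1" using hh by (simp add: cmod_def power_divide)
  have n2: "norm (Complex (- (d/2)) h) = 1" using hh by (simp add: cmod_def power_divide)
  have "z - p = u * Complex (d/2) h" by (simp add: z_def)
  then have "norm (z - p) = 1" by (simp add: norm_mult nu n1)
  then have a: "dist p z = 1" by (simp add: dist_norm norm_minus_commute)
  have e1: "z - q = u * Complex (d/2) h - u * of_real d" using wu by (simp add: z_def w_def) (metis minus_diff_eq)
  have e2: "Complex (d/2) h - of_real d = Complex (-d/2) h" by (simp add: complex_eq_iff)
  have "z - q = u * Complex (-d/2) h" unfolding e1 e2[symmetric] by (simp add: right_diff_distrib)
  then have "norm (z - q) = 1" by (simp add: norm_mult nu n2)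
  then have b: "dist q z = 1" by (simp add: dist_norm norm_minus_commute)
  show ?thesis using a b by auto
qed

lemma angeq_refl[simp]: "angeq a a" by (auto simp: angeq_def intro: exI[of _ 0])
lemma angeq_sym: "angeq a b \<Longrightarrow> angeq b a"
  unfolding angeq_def by (metis minus_diff_eq mult_minus_right of_int_minus)
lemma angeq_trans: "angeq a b \<Longrightarrow> angeq b c \<Longrightarrow> angeq a c"
  unfolding angeq_def
proof (elim exE)
  fix k l :: int assume "a - b = 2 * pi * of_int k" "b - c = 2 * pi * of_int l"
  then have "a - c = 2 * pi * of_int (k + l)" by (simp add: algebra_simps)
  then show "\<exists>k::int. a - c = 2 * pi * of_int k" ..
qed

lemma angeq_small: assumes "angeq a b" "-pi < a" "a \<le> pi" "-pi < b" "b \<le> pi" shows "a = b"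
proof -
  obtain k :: int where k: "a - b = 2 * pi * of_int k" using assms(1) by (auto simp: angeq_def)
  have "2 * pi * of_int k < 2 * pi * 1" using assms k by linarith
  then have "k < 1" by simp
  moreover have "2 * pi * (-1) < 2 * pi * of_int k" using assms k by linarith
  then have "-1 < real_of_int k" using pi_gt_zero by (simp only: mult_less_cancel_left_pos)
  then have "-1 < k" by simp
  ultimately have "k = 0" by simp
  then show ?thesis using k by simp
qed

lemma Arg_same_dist:
  fixes a b :: complex
  assumes "a \<noteq> 0" "b \<noteq> 0" "Arg a = Arg b"
  shows "norm (a - b) = \<bar>norm a - norm b\<bar>"
proof -
  define e where "e = exp (\<i> * of_real (Arg a))"
  have ne: "norm e = 1" by (simp add: e_def)
  have "a = of_real (norm a) * e" using Arg_eq[OF assms(1)] by (simp add: e_def)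
  moreover have "b = of_real (norm b) * e" using Arg_eq[OF assms(2)] assms(3) by (simp add: e_def)
  ultimately have "a - b = of_real (norm a - norm b) * e" by (metis left_diff_distrib of_real_diff)
  then have "norm (a - b) = norm (of_real (norm a - norm b) :: complex)" by (simp add: norm_mult ne)
  then show ?thesis by (simp only: norm_of_real)
qed

locale scs =
  fixes c :: "nat \<Rightarrow> complex" and n :: nat and eps :: real and E :: "(nat \<times> nat) set"
    and f g :: "nat \<Rightarrow> real"
  assumes S: "SCS_setting c n eps E f g"
begin

lemma eps_lt: "eps < 1/2" using S by (simp add: SCS_setting_def)

lemma E_pl: "(i, j) \<in> E \<Longrightarrow> i < n \<and> j < n \<and> i \<noteq> j \<and> dist (c i) (c j) \<le> 2 + eps"
  using S by (auto simp: SCS_setting_def potential_links_def)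

lemma symE: "(i, j) \<in> E \<Longrightarrow> (j, i) \<in> E"
  using S by (auto simp: SCS_setting_def dest: symD)

lemma gpm: "i < n \<Longrightarrow> g i = 1 \<or> g i = -1"
  using S by (auto simp: SCS_setting_def)

lemma sync: "(i, j) \<in> E \<Longrightarrow> angeq (sched f g i t) (linkpos c i j) \<longleftrightarrow> angeq (sched f g j t) (linkpos c j i)"
  using S unfolding SCS_setting_def by blast

lemma disj: "i < n \<Longrightarrow> j < n \<Longrightarrow> i \<noteq> j \<Longrightarrow> dist (c i) (c j) > 2"
proof (rule ccontr)
  assume "i < n" "j < n" "i \<noteq> j" "\<not> 2 < dist (c i) (c j)"
  then have "sphere (c i) 1 \<inter> sphere (c j) 1 \<noteq> {}" by (intro spheres_meet) auto
  then show False using S \<open>i < n\<close> \<open>j < n\<close> \<open>i \<noteq> j\<close> by (auto simp: SCS_setting_def)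
qed

lemma det_link:
  assumes "(i, j) \<in> E" "(i, k) \<in> E" "angeq a (linkpos c i j)" "angeq a (linkpos c i k)"
  shows "j = k"
proof (rule ccontr)
  assume jk: "j \<noteq> k"
  have "angeq (linkpos c i j) (linkpos c i k)" using assms(3,4) angeq_sym angeq_trans by blast
  then have A: "Arg (c j - c i) = Arg (c k - c i)" unfolding linkpos_def
    by (rule angeq_small) (auto simp: mpi_less_Arg Arg_le_pi)
  have ij: "i < n" "j < n" "i \<noteq> j" "dist (c i) (c j) \<le> 2 + eps" using E_pl[OF assms(1)] by auto
  have ik: "k < n" "i \<noteq> k" "dist (c i) (c k) \<le> 2 + eps" using E_pl[OF assms(2)] by auto
  have d1: "2 < norm (c j - c i)" "norm (c j - c i) \<le> 2 + eps"
    using disj[of i j] ij by (auto simp: dist_norm norm_minus_commute)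
  have d2: "2 < norm (c k - c i)" "norm (c k - c i) \<le> 2 + eps"
    using disj[of i k] ij ik by (auto simp: dist_norm norm_minus_commute)
  have "norm ((c j - c i) - (c k - c i)) = \<bar>norm (c j - c i) - norm (c k - c i)\<bar>"
    by (rule Arg_same_dist) (use d1 d2 A in auto)
  then have "dist (c j) (c k) < 2" using d1 d2 eps_lt by (simp add: dist_norm)
  then show False using disj[of j k] ij ik jk by auto
qed

end


lemma real_induct:
  fixes a :: real
  assumes step: "\<And>\<sigma>. a \<le> \<sigma> \<Longrightarrow> (\<And>s. a \<le> s \<Longrightarrow> s < \<sigma> \<Longrightarrow> Q s) \<Longrightarrow> \<exists>\<delta>>0. \<forall>s. \<sigma> \<le> s \<and> s < \<sigma> + \<delta> \<longrightarrow> Q s"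
  shows "a \<le> t \<Longrightarrow> Q t"
proof (rule ccontr)
  assume at: "a \<le> t" "\<not> Q t"
  define S where "S = {s. a \<le> s \<and> \<not> Q s}"
  have ne: "S \<noteq> {}" using at by (auto simp: S_def)
  have bb: "bdd_below S" by (auto simp: S_def bdd_below_def)
  define \<sigma> where "\<sigma> = Inf S"
  have as: "a \<le> \<sigma>" unfolding \<sigma>_def by (rule cInf_greatest[OF ne]) (auto simp: S_def)
  have "\<And>s. a \<le> s \<Longrightarrow> s < \<sigma> \<Longrightarrow> Q s"
  proof (rule ccontr)
    fix s assume "a \<le> s" "s < \<sigma>" "\<not> Q s"
    then have "s \<in> S" by (auto simp: S_def)
    then have "\<sigma> \<le> s" unfolding \<sigma>_def by (rule cInf_lower[OF _ bb])
    then show False using \<open>s < \<sigma>\<close> by simp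
  qed
  then obtain \<delta> where d: "\<delta> > 0" "\<forall>s. \<sigma> \<le> s \<and> s < \<sigma> + \<delta> \<longrightarrow> Q s" using step[OF as] by blast
  have "\<sigma> + \<delta> \<le> Inf S"
  proof (rule cInf_greatest[OF ne])
    fix x assume x: "x \<in> S"
    then have "\<sigma> \<le> x" unfolding \<sigma>_def by (rule cInf_lower[OF _ bb])
    then show "\<sigma> + \<delta> \<le> x" using d x by (auto simp: S_def not_less[symmetric])
  qed
  then show False using d unfolding \<sigma>_def by simp
qed



lemma lc_ev: "left_const x t i \<longleftrightarrow> eventually (\<lambda>s. x s = i) (at_left t)"
proof -
  have "eventually (\<lambda>s. x s = i) (at_left t) \<longleftrightarrow> (\<exists>b<t. \<forall>y>b. y < t \<longrightarrow> x y = i)"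
    by (rule eventually_at_left[of "t - 1"]) simp
  also have "\<dots> \<longleftrightarrow> left_const x t i"
    unfolding left_const_def
  proof
    assume "\<exists>b<t. \<forall>y>b. y < t \<longrightarrow> x y = i"
    then obtain b where "b < t" "\<forall>y>b. y < t \<longrightarrow> x y = i" by blast
    then show "\<exists>\<delta>>0. \<forall>s. t - \<delta> < s \<and> s < t \<longrightarrow> x s = i" by (intro exI[of _ "t - b"]) auto
  next
    assume "\<exists>\<delta>>0. \<forall>s. t - \<delta> < s \<and> s < t \<longrightarrow> x s = i"
    then obtain d where "d > 0" "\<forall>s. t - d < s \<and> s < t \<longrightarrow> x s = i" by blast
    then show "\<exists>b<t. \<forall>y>b. y < t \<longrightarrow> x y = i" by (intro exI[of _ "t - d"]) auto
  qed
  finally show ?thesis ..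
qed

lemma rc_ev: "right_const x t \<longleftrightarrow> eventually (\<lambda>s. x s = x t) (at_right t)"
proof -
  have "eventually (\<lambda>s. x s = x t) (at_right t) \<longleftrightarrow> (\<exists>b>t. \<forall>y>t. y < b \<longrightarrow> x y = x t)"
    by (rule eventually_at_right[of t "t + 1"]) simp
  also have "\<dots> \<longleftrightarrow> right_const x t"
    unfolding right_const_def
  proof
    assume "\<exists>b>t. \<forall>y>t. y < b \<longrightarrow> x y = x t"
    then obtain b where "b > t" "\<forall>y>t. y < b \<longrightarrow> x y = x t" by blast
    then show "\<exists>\<delta>>0. \<forall>s. t \<le> s \<and> s < t + \<delta> \<longrightarrow> x s = x t"
    proof (intro exI[of _ "b - t"] conjI allI impI)
      fix s assume "t \<le> s \<and> s < t + (b - t)"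
      then show "x s = x t" using \<open>\<forall>y>t. y < b \<longrightarrow> x y = x t\<close> by (cases "s = t") (simp, metis diff_add_cancel add.commute order_le_less)
    qed (use \<open>b > t\<close> in simp)
  next
    assume "\<exists>\<delta>>0. \<forall>s. t \<le> s \<and> s < t + \<delta> \<longrightarrow> x s = x t"
    then obtain d where d: "d > 0" "\<forall>s. t \<le> s \<and> s < t + d \<longrightarrow> x s = x t" by blast
    show "\<exists>b>t. \<forall>y>t. y < b \<longrightarrow> x y = x t"
    proof (intro exI[of _ "t + d"] conjI allI impI)
      fix y assume "t < y" "y < t + d"
      then show "x y = x t" using d(2) by (meson less_imp_le)
    qed (use d in simp)
  qed
  finally show ?thesis ..
qed

lemma ev_right_interval:
  assumes "eventually P (at_right (t::real))"
  obtains d where "d > 0" "\<And>s. t < s \<Longrightarrow> s < t + d \<Longrightarrow> P s"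
proof -
  obtain b where "b > t" "\<forall>y>t. y < b \<longrightarrow> P y"
    using assms eventually_at_right[of t "t + 1"] by auto
  then show ?thesis using that[of "b - t"] by auto
qed

lemma ev_left_interval:
  assumes "eventually P (at_left (t::real))"
  obtains d where "d > 0" "\<And>s. t - d < s \<Longrightarrow> s < t \<Longrightarrow> P s"
proof -
  obtain b where "b < t" "\<forall>y>b. y < t \<longrightarrow> P y"
    using assms eventually_at_left[of "t - 1" t] by auto
  then show ?thesis using that[of "t - b"] by auto
qed

lemma left_interval_ev:
  assumes "d > 0" "\<And>s. t - d < s \<Longrightarrow> s < t \<Longrightarrow> P s"
  shows "eventually P (at_left (t::real))"
  using assms eventually_at_left[of "t - 1" t] by (auto intro!: exI[of _ "t - d"])

lemma lc_unique: "left_const x t i \<Longrightarrow> left_const x t j \<Longrightarrow> i = j"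
  unfolding lc_ev
proof -
  assume "eventually (\<lambda>s. x s = i) (at_left t)" "eventually (\<lambda>s. x s = j) (at_left t)"
  then have "eventually (\<lambda>s. i = j) (at_left t)" by eventually_elim simp
  then show "i = j" by (simp add: eventually_const_iff)
qed

lemma ev_left_point:
  assumes "eventually P (at_left (t::real))" "b < t"
  obtains s where "b < s" "s < t" "P s"
proof -
  have "eventually (\<lambda>s. P s \<and> s \<in> {b<..<t}) (at_left t)"
    using assms eventually_at_left_real[OF assms(2)] by (auto intro: eventually_conj)
  then obtain s where "P s \<and> s \<in> {b<..<t}"
    using eventually_happens'[of "at_left t"] trivial_limit_at_left_real[of t]
    unfolding trivial_limit_def by blast
  then show ?thesis using that by auto
qed



lemma nang_eq_angeq: "nang a = nang b \<longleftrightarrow> angeq a b"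
proof
  assume "nang a = nang b"
  then have "a - b = 2 * pi * of_int (\<lfloor>a / (2 * pi)\<rfloor> - \<lfloor>b / (2 * pi)\<rfloor>)"
    by (simp add: nang_def algebra_simps)
  then show "angeq a b" unfolding angeq_def ..
next
  assume "angeq a b"
  then obtain k :: int where k: "a - b = 2 * pi * of_int k" by (auto simp: angeq_def)
  then have "a / (2 * pi) = b / (2 * pi) + of_int k" by (simp add: field_simps)
  then have "\<lfloor>a / (2 * pi)\<rfloor> = \<lfloor>b / (2 * pi)\<rfloor> + k" by simp
  then show "nang a = nang b" using k by (simp add: nang_def algebra_simps)
qed

context scs begin

definition Ev :: "nat \<Rightarrow> real \<Rightarrow> bool" where
  "Ev i s \<longleftrightarrow> (\<exists>j. (i, j) \<in> E \<and> angeq (sched f g i s) (linkpos c i j))"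

definition nxt :: "nat \<Rightarrow> real \<Rightarrow> nat" where
  "nxt i s = (if Ev i s then (SOME j. (i, j) \<in> E \<and> angeq (sched f g i s) (linkpos c i j)) else i)"

lemma Ev_nxt: "Ev i s \<Longrightarrow> (i, nxt i s) \<in> E \<and> angeq (sched f g i s) (linkpos c i (nxt i s))"
proof -
  assume ev: "Ev i s"
  then have "\<exists>j. (i, j) \<in> E \<and> angeq (sched f g i s) (linkpos c i j)" by (simp add: Ev_def)
  then have "(\<lambda>j. (i, j) \<in> E \<and> angeq (sched f g i s) (linkpos c i j)) (SOME j. (i, j) \<in> E \<and> angeq (sched f g i s) (linkpos c i j))"
    by (rule someI_ex)
  then show ?thesis using ev by (simp add: nxt_def)
qed

lemma nxt_unique: "(i, j) \<in> E \<Longrightarrow> angeq (sched f g i s) (linkpos c i j) \<Longrightarrow> nxt i s = j"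
proof -
  assume a: "(i, j) \<in> E" "angeq (sched f g i s) (linkpos c i j)"
  then have "Ev i s" unfolding Ev_def by blast
  from Ev_nxt[OF this] a show ?thesis using det_link by blast
qed

lemma nxt_noEv: "\<not> Ev i s \<Longrightarrow> nxt i s = i" by (simp add: nxt_def)

lemma Ev_lt: "Ev i s \<Longrightarrow> i < n" unfolding Ev_def using E_pl by blast

lemma nxt_lt: "i < n \<Longrightarrow> nxt i s < n"
  by (cases "Ev i s") (auto dest: Ev_nxt E_pl simp: nxt_noEv)

lemma Ev_sym: "Ev i s \<Longrightarrow> Ev (nxt i s) s \<and> nxt (nxt i s) s = i"
proof -
  assume "Ev i s"
  then have a: "(i, nxt i s) \<in> E" "angeq (sched f g i s) (linkpos c i (nxt i s))" using Ev_nxt by auto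
  then have b: "(nxt i s, i) \<in> E" "angeq (sched f g (nxt i s) s) (linkpos c (nxt i s) i)"
    using symE sync by auto
  then show ?thesis using nxt_unique[OF b] unfolding Ev_def by blast
qed

lemma nxt_inj: "nxt i s = nxt i' s \<Longrightarrow> i = i'"
proof -
  assume eq: "nxt i s = nxt i' s"
  show "i = i'"
  proof (cases "Ev i s")
    case True
    note A = Ev_sym[OF True]
    show ?thesis
    proof (cases "Ev i' s")
      case True
      then show ?thesis using A Ev_sym[OF True] eq by metis
    next
      case False
      then have "nxt i s = i'" using eq nxt_noEv by simp
      then show ?thesis using A False by simp
    qed
  next
    case False
    then have ni: "nxt i s = i" by (simp add: nxt_noEv)
    show ?thesis
    proof (cases "Ev i' s")
      case True
      then show ?thesis using Ev_sym[OF True] eq ni False by metis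
    next
      case False
      then show ?thesis using eq ni nxt_noEv by simp
    qed
  qed
qed

lemma sched_shift: "i < n \<Longrightarrow> angeq (sched f g i (s + of_int d)) a \<longleftrightarrow> angeq (sched f g i s) a"
proof -
  assume "i < n"
  then have gi: "g i = 1 \<or> g i = -1" by (rule gpm)
  have "angeq (sched f g i (s + of_int d)) (sched f g i s)"
    unfolding angeq_def sched_def using gi
    by (auto intro: exI[of _ d] exI[of _ "-d"] simp: algebra_simps)
  then show ?thesis using angeq_sym angeq_trans by blast
qed

lemma Ev_shift: "Ev i (s + of_int d) \<longleftrightarrow> Ev i s"
  unfolding Ev_def using sched_shift E_pl by blast

lemma nxt_shift: "nxt i (s + of_int d) = nxt i s"
proof (cases "Ev i s")
  case True
  then have "Ev i (s + of_int d)" by (simp add: Ev_shift)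
  from Ev_nxt[OF this] have "(i, nxt i (s + of_int d)) \<in> E" "angeq (sched f g i s) (linkpos c i (nxt i (s + of_int d)))"
    using sched_shift E_pl by blast+
  then show ?thesis using nxt_unique by simp
next
  case False
  then show ?thesis by (simp add: Ev_shift nxt_noEv)
qed

lemma pt_shift: "k < n \<Longrightarrow> pt f g k (s + of_int d) = pt f g k s"
  unfolding pt_def using sched_shift[of k s d] by (simp add: nang_eq_angeq)

lemma pt_eq:
  assumes "pt f g k s = pt f g k' s'" "k < n"
  shows "k' = k \<and> (\<exists>d::int. s' = s + of_int d)"
proof -
  have kk: "k' = k" using assms by (simp add: pt_def)
  have "angeq (sched f g k s) (sched f g k s')" using assms kk by (simp add: pt_def nang_eq_angeq)
  then obtain m :: int where m: "sched f g k s - sched f g k s' = 2 * pi * of_int m"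
    by (auto simp: angeq_def)
  then have "2 * pi * (g k * (s - s')) = 2 * pi * of_int m" by (simp add: sched_def algebra_simps)
  then have "g k * (s - s') = of_int m" by simp
  then have "s' = s + of_int (-m) \<or> s' = s + of_int m" using gpm[OF assms(2)] by auto
  then show ?thesis using kk by blast
qed

lemma shift_run_iff:
  "shift_run c n E f g x t0 i0 \<longleftrightarrow>
     x t0 = i0 \<and> (\<forall>t\<ge>t0. x t < n \<and> right_const x t) \<and> (\<forall>t>t0. \<exists>i. left_const x t i) \<and>
     (\<forall>t>t0. \<forall>i. left_const x t i \<longrightarrow> x t = nxt i t)"
proof -
  have "\<And>i t. ((\<exists>j. (i, j) \<in> E \<and> angeq (sched f g i t) (linkpos c i j)) \<longrightarrow>
            (i, x t) \<in> E \<and> angeq (sched f g i t) (linkpos c i (x t))) \<and>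
        ((\<not> (\<exists>j. (i, j) \<in> E \<and> angeq (sched f g i t) (linkpos c i j))) \<longrightarrow> x t = i)
        \<longleftrightarrow> x t = nxt i t"
    using Ev_nxt nxt_unique nxt_noEv unfolding Ev_def[symmetric] by metis
  then show ?thesis unfolding shift_run_def by simp
qed

lemma sr_step: "shift_run c n E f g x t0 i0 \<Longrightarrow> t0 < t \<Longrightarrow> left_const x t i \<Longrightarrow> x t = nxt i t"
  by (simp add: shift_run_iff)

lemma sr_lt: "shift_run c n E f g x t0 i0 \<Longrightarrow> t0 \<le> t \<Longrightarrow> x t < n"
  by (simp add: shift_run_iff)

lemma sr_rc: "shift_run c n E f g x t0 i0 \<Longrightarrow> t0 \<le> t \<Longrightarrow> right_const x t"
  by (simp add: shift_run_iff)

lemma sr_lc: "shift_run c n E f g x t0 i0 \<Longrightarrow> t0 < t \<Longrightarrow> \<exists>i. left_const x t i"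
  by (simp add: shift_run_iff)

lemma sr_start: "shift_run c n E f g x t0 i0 \<Longrightarrow> x t0 = i0"
  by (simp add: shift_run_iff)

lemma sr_time_shift:
  assumes "shift_run c n E f g x t0 i0"
  shows "shift_run c n E f g (\<lambda>s. x (s + of_int d)) (t0 - of_int d) i0"
proof -
  have lc: "left_const (\<lambda>s. x (s + of_int d)) t i \<longleftrightarrow> left_const x (t + of_int d) i" for t i
    unfolding left_const_def
  proof
    assume "\<exists>\<delta>>0. \<forall>s. t - \<delta> < s \<and> s < t \<longrightarrow> x (s + of_int d) = i"
    then obtain e where e: "e > 0" "\<forall>s. t - e < s \<and> s < t \<longrightarrow> x (s + of_int d) = i" by blast
    show "\<exists>\<delta>>0. \<forall>s. t + of_int d - \<delta> < s \<and> s < t + of_int d \<longrightarrow> x s = i"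
    proof (intro exI[of _ e] conjI allI impI)
      fix s assume "t + of_int d - e < s \<and> s < t + of_int d"
      then show "x s = i" using e(2)[rule_format, of "s - of_int d"] by simp
    qed (rule e)
  next
    assume "\<exists>\<delta>>0. \<forall>s. t + of_int d - \<delta> < s \<and> s < t + of_int d \<longrightarrow> x s = i"
    then obtain e where e: "e > 0" "\<forall>s. t + of_int d - e < s \<and> s < t + of_int d \<longrightarrow> x s = i" by blast
    show "\<exists>\<delta>>0. \<forall>s. t - \<delta> < s \<and> s < t \<longrightarrow> x (s + of_int d) = i"
    proof (intro exI[of _ e] conjI allI impI)
      fix s assume "t - e < s \<and> s < t"
      then show "x (s + of_int d) = i" using e(2)[rule_format, of "s + of_int d"] by simp
    qed (rule e)
  qed
  have rc: "right_const (\<lambda>s. x (s + of_int d)) t \<longleftrightarrow> right_const x (t + of_int d)" for t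
    unfolding right_const_def
  proof
    assume "\<exists>\<delta>>0. \<forall>s. t \<le> s \<and> s < t + \<delta> \<longrightarrow> x (s + of_int d) = x (t + of_int d)"
    then obtain e where e: "e > 0" "\<forall>s. t \<le> s \<and> s < t + e \<longrightarrow> x (s + of_int d) = x (t + of_int d)" by blast
    show "\<exists>\<delta>>0. \<forall>s. t + of_int d \<le> s \<and> s < t + of_int d + \<delta> \<longrightarrow> x s = x (t + of_int d)"
    proof (intro exI[of _ e] conjI allI impI)
      fix s assume "t + of_int d \<le> s \<and> s < t + of_int d + e"
      then show "x s = x (t + of_int d)" using e(2)[rule_format, of "s - of_int d"] by simp
    qed (rule e)
  next
    assume "\<exists>\<delta>>0. \<forall>s. t + of_int d \<le> s \<and> s < t + of_int d + \<delta> \<longrightarrow> x s = x (t + of_int d)"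
    then obtain e where e: "e > 0" "\<forall>s. t + of_int d \<le> s \<and> s < t + of_int d + e \<longrightarrow> x s = x (t + of_int d)" by blast
    show "\<exists>\<delta>>0. \<forall>s. t \<le> s \<and> s < t + \<delta> \<longrightarrow> x (s + of_int d) = x (t + of_int d)"
    proof (intro exI[of _ e] conjI allI impI)
      fix s assume "t \<le> s \<and> s < t + e"
      then show "x (s + of_int d) = x (t + of_int d)" using e(2)[rule_format, of "s + of_int d"] by simp
    qed (rule e)
  qed
  show ?thesis
    unfolding shift_run_iff lc rc
  proof (intro conjI allI impI)
    show "x (t0 - of_int d + of_int d) = i0" using sr_start[OF assms] by simp
  next
    fix t assume "t0 - of_int d \<le> t"
    then show "x (t + of_int d) < n" "right_const x (t + of_int d)"
      using sr_lt[OF assms] sr_rc[OF assms] by auto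
  next
    fix t assume "t0 - of_int d < t"
    then show "\<exists>i. left_const x (t + of_int d) i" using sr_lc[OF assms] by auto
  next
    fix t i assume "t0 - of_int d < t" "left_const x (t + of_int d) i"
    then show "x (t + of_int d) = nxt i t" using sr_step[OF assms, of "t + of_int d" i] nxt_shift by auto
  qed
qed

end

context scs begin

lemma sr_const:
  assumes sr: "shift_run c n E f g x t0 i0" and "t0 \<le> a"
    and noev: "\<And>k w. a < w \<Longrightarrow> w < b \<Longrightarrow> \<not> Ev k w"
    and sb: "a \<le> s" "s < b"
  shows "x s = x a"
proof -
  have main: "s < b \<longrightarrow> x s = x a" if "a \<le> s" for s
  proof (rule real_induct[of a "\<lambda>s. s < b \<longrightarrow> x s = x a", OF _ that])
    fix \<sigma> assume "a \<le> \<sigma>" and IH: "\<And>s. a \<le> s \<Longrightarrow> s < \<sigma> \<Longrightarrow> s < b \<longrightarrow> x s = x a"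
    note 1 = this
    show "\<exists>\<delta>>0. \<forall>s. \<sigma> \<le> s \<and> s < \<sigma> + \<delta> \<longrightarrow> (s < b \<longrightarrow> x s = x a)"
    proof (cases "b \<le> \<sigma>")
      case True
      then show ?thesis by (intro exI[of _ 1]) auto
    next
      case False
      have xs: "x \<sigma> = x a"
      proof (cases "\<sigma> = a")
        case False
        then have sa: "a < \<sigma>" using 1 by simp
        have "left_const x \<sigma> (x a)" unfolding left_const_def
        proof (intro exI[of _ "\<sigma> - a"] conjI allI impI)
          fix s assume "\<sigma> - (\<sigma> - a) < s \<and> s < \<sigma>"
          then have "a \<le> s" "s < \<sigma>" "s < b" using \<open>\<not> b \<le> \<sigma>\<close> by auto
          then show "x s = x a" by (meson IH)
        qed (use sa in simp)
        then have "x \<sigma> = nxt (x a) \<sigma>" using sr_step[OF sr] sa \<open>t0 \<le> a\<close> by simp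
        also have "\<dots> = x a" using noev[of \<sigma> "x a"] sa \<open>\<not> b \<le> \<sigma>\<close> by (simp add: nxt_noEv)
        finally show ?thesis .
      qed simp
      obtain e where e: "e > 0" "\<forall>s. \<sigma> \<le> s \<and> s < \<sigma> + e \<longrightarrow> x s = x \<sigma>"
      proof -
        have "t0 \<le> \<sigma>" using 1 \<open>t0 \<le> a\<close> by simp
        then have "right_const x \<sigma>" by (rule sr_rc[OF sr])
        then show ?thesis using that unfolding right_const_def by blast
      qed
      show ?thesis
      proof (intro exI[of _ e] conjI allI impI)
        fix s assume "\<sigma> \<le> s \<and> s < \<sigma> + e" "s < b"
        then have "x s = x \<sigma>" using e(2) by blast
        then show "x s = x a" using xs by simp
      qed (rule e(1))
    qed
  qed
  show "x s = x a" using main[OF sb(1)] sb(2) by (rule mp)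
qed

lemma sr_left:
  assumes sr: "shift_run c n E f g x t0 i0" and "t0 \<le> a" "a < b"
    and noev: "\<And>k w. a < w \<Longrightarrow> w < b \<Longrightarrow> \<not> Ev k w"
  shows "x b = nxt (x a) b"
proof -
  have "left_const x b (x a)" unfolding left_const_def
  proof (intro exI[of _ "b - a"] conjI allI impI)
    fix s assume "b - (b - a) < s \<and> s < b"
    then have "a \<le> s" "s < b" by auto
    then show "x s = x a" using sr_const[OF sr \<open>t0 \<le> a\<close>, of b s] noev by blast
  qed (use \<open>a < b\<close> in simp)
  moreover have "t0 < b" using assms by simp
  ultimately show ?thesis using sr_step[OF sr, of b "x a"] by blast
qed

lemma sr_closed:
  assumes sr: "shift_run c n E f g x t0 i0" and "t0 \<le> a" "a \<le> b"
    and noev: "\<And>k w. a < w \<Longrightarrow> w \<le> b \<Longrightarrow> \<not> Ev k w"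
  shows "x b = x a"
proof (cases "a = b")
  case False
  then have "x b = nxt (x a) b" using sr_left[OF sr \<open>t0 \<le> a\<close>] noev assms by simp
  then show ?thesis using noev[of b "x a"] False assms by (simp add: nxt_noEv)
qed simp

lemma sr_uniq_gen:
  assumes x: "shift_run c n E f g x t0 i0" and y: "shift_run c n E f g y t1 j0"
    and "t0 \<le> a" "t1 \<le> a" "(x a = y a) = b" and as: "a \<le> s"
  shows "(x s = y s) = b"
proof (rule real_induct[of a "\<lambda>s. (x s = y s) = b", OF _ as])
  fix \<sigma> assume 1: "a \<le> \<sigma>" and IH: "\<And>s. a \<le> s \<Longrightarrow> s < \<sigma> \<Longrightarrow> (x s = y s) = b"
  have at: "(x \<sigma> = y \<sigma>) = b"
  proof (cases "\<sigma> = a")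
    case True then show ?thesis using assms by simp
  next
    case False
    then have sa: "a < \<sigma>" using 1 by simp
    obtain ix where ix: "left_const x \<sigma> ix" using sr_lc[OF x] sa assms by force
    obtain iy where iy: "left_const y \<sigma> iy" using sr_lc[OF y] sa assms by force
    have ev: "eventually (\<lambda>s. x s = ix \<and> y s = iy) (at_left \<sigma>)"
      using ix iy unfolding lc_ev by (rule eventually_conj)
    obtain s where s: "a < s" "s < \<sigma>" "x s = ix \<and> y s = iy" by (rule ev_left_point[OF ev sa])
    have "(ix = iy) = b" using IH[of s] s by auto
    moreover have "x \<sigma> = nxt ix \<sigma>" "y \<sigma> = nxt iy \<sigma>" using sr_step[OF x] sr_step[OF y] ix iy sa assms by auto
    ultimately show ?thesis using nxt_inj by metis
  qed
  have evr: "eventually (\<lambda>s. x s = x \<sigma> \<and> y s = y \<sigma>) (at_right \<sigma>)"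
    using sr_rc[OF x, of \<sigma>] sr_rc[OF y, of \<sigma>] 1 assms unfolding rc_ev by (auto intro: eventually_conj)
  obtain d where d: "d > 0" "\<And>s. \<sigma> < s \<Longrightarrow> s < \<sigma> + d \<Longrightarrow> x s = x \<sigma> \<and> y s = y \<sigma>"
    using ev_right_interval[OF evr] by blast
  show "\<exists>\<delta>>0. \<forall>s. \<sigma> \<le> s \<and> s < \<sigma> + \<delta> \<longrightarrow> (x s = y s) = b"
  proof (intro exI[of _ d] conjI allI impI)
    fix s assume "\<sigma> \<le> s \<and> s < \<sigma> + d"
    then show "(x s = y s) = b" using d at by (cases "s = \<sigma>") auto
  qed (rule d)
qed

lemma sr_uniq:
  assumes "shift_run c n E f g x t0 i0" "shift_run c n E f g y t1 j0"
    "t0 \<le> a" "t1 \<le> a" "x a = y a" "a \<le> s"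
  shows "x s = y s"
  using sr_uniq_gen[OF assms(1,2,3,4), of True] assms by simp

lemma sr_diff:
  assumes "shift_run c n E f g x t0 i0" "shift_run c n E f g y t1 j0"
    "t0 \<le> a" "t1 \<le> a" "x a \<noteq> y a" "a \<le> s"
  shows "x s \<noteq> y s"
  using sr_uniq_gen[OF assms(1,2,3,4), of False] assms by simp

lemma sr_period_from:
  assumes sr: "shift_run c n E f g x t0 i0" and d: "x (t0 + real d) = x t0"
  shows "t0 \<le> s \<Longrightarrow> x (s + real d) = x s"
proof -
  have y: "shift_run c n E f g (\<lambda>s. x (s + of_int (int d))) (t0 - of_int (int d)) i0"
    by (rule sr_time_shift[OF sr])
  assume "t0 \<le> s"
  then show ?thesis using sr_uniq[OF y sr, of t0 s] d by simp
qed

lemma sr_periodic: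
  assumes sr: "shift_run c n E f g x t0 i0"
  shows "\<exists>d::nat. d > 0 \<and> (\<forall>s\<ge>t0. x (s + real d) = x s)"
proof -
  define h where "h = (\<lambda>m::nat. x (t0 + real m))"
  have "h ` {0..n} \<subseteq> {..<n}" using sr_lt[OF sr] by (auto simp: h_def)
  then have "\<not> inj_on h {0..n}"
    using card_inj_on_le[of h "{0..n}" "{..<n}"] by auto
  then obtain m1 m2 where m: "m1 \<in> {0..n}" "m2 \<in> {0..n}" "m1 \<noteq> m2" "h m1 = h m2"
    unfolding inj_on_def by blast
  have "\<exists>p q. p < q \<and> h p = h q"
  proof (cases "m1 < m2")
    case True then show ?thesis using m by blast
  next
    case False then have "m2 < m1" using m by simp
    then show ?thesis using m by (intro exI[of _ m2] exI[of _ m1]) simp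
  qed
  then obtain p q where pq: "p < q" "h p = h q" by blast
  define d where "d = q - p"
  have y: "shift_run c n E f g (\<lambda>s. x (s + of_int (int d))) (t0 - of_int (int d)) i0"
    by (rule sr_time_shift[OF sr])
  have "x (t0 + real d) = x t0"
  proof (rule ccontr)
    assume ne: "x (t0 + real d) \<noteq> x t0"
    have "x (t0 + real p + of_int (int d)) \<noteq> x (t0 + real p)"
      using sr_diff[OF y sr, of t0 "t0 + real p"] ne by simp
    moreover have "t0 + real p + of_int (int d) = t0 + real q" using pq by (simp add: d_def)
    ultimately show False using pq by (simp add: h_def del: of_int_of_nat_eq)
  qed
  moreover have "d > 0" using pq by (simp add: d_def)
  ultimately show ?thesis using sr_period_from[OF sr] by blast
qed

lemma sr_period_mult:
  assumes sr: "shift_run c n E f g x t0 i0" and p: "\<forall>s\<ge>t0. x (s + real d) = x s"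
  shows "t0 \<le> s \<Longrightarrow> x (s + real (m * d)) = x s"
proof (induction m)
  case (Suc m)
  have e: "s + real (Suc m * d) = (s + real (m * d)) + real d" by simp
  have "x (s + real (Suc m * d)) = x ((s + real (m * d)) + real d)" by (rule arg_cong[OF e])
  also have "\<dots> = x (s + real (m * d))" using p Suc.prems by (metis le_add_same_cancel1 of_nat_0_le_iff order_trans)
  finally show ?case using Suc by simp
qed simp

lemma orbit_late:
  assumes sr: "shift_run c n E f g x t0 i0" and p: "p \<in> orbit f g x t0"
  shows "\<exists>s\<ge>M. s \<ge> t0 \<and> p = pt f g (x s) s"
proof -
  obtain s where s: "s \<ge> t0" "p = pt f g (x s) s" using p by (auto simp: orbit_def)
  obtain d :: nat where d: "d > 0" "\<forall>s\<ge>t0. x (s + real d) = x s" using sr_periodic[OF sr] by blast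
  obtain m :: nat where m: "real m > M - s" using reals_Archimedean2 by blast
  have "m \<le> m * d" using d by simp
  then have "real m \<le> real (m * d)" by linarith
  then have big: "s + real (m * d) \<ge> M" using m by linarith
  have big2: "t0 \<le> s + real (m * d)" using s(1) of_nat_0_le_iff[of "m * d"] by linarith
  have "x (s + real (m * d)) = x s" using sr_period_mult[OF sr d(2)] s by simp
  moreover have "pt f g (x s) (s + of_int (int (m * d))) = pt f g (x s) s"
    using pt_shift sr_lt[OF sr] s by blast
  ultimately show ?thesis using big big2 s by (intro exI[of _ "s + real (m * d)"]) auto
qed

end

lemma int_isolated:
  fixes y :: real
  shows "\<exists>\<delta>>0. \<forall>m::int. of_int m \<noteq> y \<longrightarrow> \<delta> \<le> \<bar>of_int m - y\<bar>"
proof (cases "y = of_int \<lfloor>y\<rfloor>")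
  case True
  show ?thesis
  proof (intro exI[of _ 1] conjI allI impI)
    fix m :: int assume "of_int m \<noteq> y"
    then have "m \<noteq> \<lfloor>y\<rfloor>" using True by auto
    then have "1 \<le> \<bar>m - \<lfloor>y\<rfloor>\<bar>" by simp
    then have "1 \<le> \<bar>of_int (m - \<lfloor>y\<rfloor>) :: real\<bar>" by linarith
    then show "1 \<le> \<bar>of_int m - y\<bar>" using True by (metis of_int_diff)
  qed simp
next
  case False
  have l: "of_int \<lfloor>y\<rfloor> < y" using False of_int_floor_le[of y] by linarith
  have u: "y < of_int \<lfloor>y\<rfloor> + 1" by linarith
  show ?thesis
  proof (intro exI[of _ "min (y - of_int \<lfloor>y\<rfloor>) (of_int \<lfloor>y\<rfloor> + 1 - y)"] conjI allI impI)
    fix m :: int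
    show "min (y - of_int \<lfloor>y\<rfloor>) (of_int \<lfloor>y\<rfloor> + 1 - y) \<le> \<bar>of_int m - y\<bar>"
    proof (cases "m \<le> \<lfloor>y\<rfloor>")
      case True
      then have "(of_int m :: real) \<le> of_int \<lfloor>y\<rfloor>" by linarith
      then show ?thesis using l by linarith
    next
      case False
      then have "(of_int m :: real) \<ge> of_int \<lfloor>y\<rfloor> + 1" by linarith
      then show ?thesis using u by linarith
    qed
  qed (use l u in auto)
qed

context scs begin

lemma pair_isolated:
  assumes "k < n"
  shows "\<exists>\<delta>>0. \<forall>w. w \<noteq> \<sigma> \<and> \<bar>w - \<sigma>\<bar> < \<delta> \<longrightarrow> \<not> angeq (sched f g k w) a"
proof -
  define y where "y = (\<lambda>w. (f k - a) / (2 * pi) + g k * w)"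
  obtain \<delta> where d: "\<delta> > 0" "\<forall>m::int. of_int m \<noteq> y \<sigma> \<longrightarrow> \<delta> \<le> \<bar>of_int m - y \<sigma>\<bar>"
    using int_isolated by blast
  have gk: "\<bar>g k\<bar> = 1" using gpm[OF assms] by auto
  show ?thesis
  proof (intro exI[of _ \<delta>] conjI allI impI notI)
    fix w assume w: "w \<noteq> \<sigma> \<and> \<bar>w - \<sigma>\<bar> < \<delta>" and an: "angeq (sched f g k w) a"
    then obtain m :: int where m: "sched f g k w - a = 2 * pi * of_int m" by (auto simp: angeq_def)
    then have ym: "y w = of_int m" by (simp add: y_def sched_def field_simps)
    have "y w - y \<sigma> = g k * (w - \<sigma>)" by (simp add: y_def algebra_simps)
    then have "\<bar>y w - y \<sigma>\<bar> = \<bar>w - \<sigma>\<bar>" using gk by (simp add: abs_mult)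
    then have "of_int m \<noteq> y \<sigma>" "\<bar>of_int m - y \<sigma>\<bar> < \<delta>" using w ym by auto
    then show False using d(2) by force
  qed (rule d(1))
qed

lemma finite_E: "finite E"
proof -
  have "E \<subseteq> {..<n} \<times> {..<n}" using E_pl by auto
  then show ?thesis by (rule finite_subset) simp
qed

lemma events_isolated: "\<exists>\<delta>>0. \<forall>k w. w \<noteq> \<sigma> \<and> \<bar>w - \<sigma>\<bar> < \<delta> \<longrightarrow> \<not> Ev k w"
proof -
  have "\<forall>p\<in>E. eventually (\<lambda>w. \<not> angeq (sched f g (fst p) w) (linkpos c (fst p) (snd p))) (at \<sigma>)"
  proof
    fix p assume "p \<in> E"
    then have "fst p < n" using E_pl[of "fst p" "snd p"] by auto
    then obtain \<delta> where "\<delta> > 0" "\<forall>w. w \<noteq> \<sigma> \<and> \<bar>w - \<sigma>\<bar> < \<delta> \<longrightarrow> \<not> angeq (sched f g (fst p) w) (linkpos c (fst p) (snd p))"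
      using pair_isolated by blast
    then show "eventually (\<lambda>w. \<not> angeq (sched f g (fst p) w) (linkpos c (fst p) (snd p))) (at \<sigma>)"
      unfolding eventually_at by (intro exI[of _ \<delta>]) (auto simp: dist_real_def)
  qed
  then have "eventually (\<lambda>w. \<forall>p\<in>E. \<not> angeq (sched f g (fst p) w) (linkpos c (fst p) (snd p))) (at \<sigma>)"
    by (rule eventually_ball_finite[OF finite_E])
  then obtain \<delta> where d: "\<delta> > 0" "\<forall>w\<in>UNIV. w \<noteq> \<sigma> \<and> dist w \<sigma> < \<delta> \<longrightarrow> (\<forall>p\<in>E. \<not> angeq (sched f g (fst p) w) (linkpos c (fst p) (snd p)))"
    unfolding eventually_at by blast
  show ?thesis
  proof (intro exI[of _ \<delta>] conjI allI impI)
    fix k w assume "w \<noteq> \<sigma> \<and> \<bar>w - \<sigma>\<bar> < \<delta>"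
    then have "\<forall>p\<in>E. \<not> angeq (sched f g (fst p) w) (linkpos c (fst p) (snd p))"
      using d(2) by (auto simp: dist_real_def)
    then show "\<not> Ev k w" unfolding Ev_def by force
  qed (rule d(1))
qed

lemma R_flat:
  assumes sr: "shift_run c n E f g x t0 i0" and "u \<le> v"
    and noev: "\<And>k w. u < w \<Longrightarrow> w \<le> v \<Longrightarrow> \<not> Ev k w"
  shows "pt f g k u \<in> orbit f g x t0 \<longleftrightarrow> pt f g k v \<in> orbit f g x t0"
proof
  assume "pt f g k u \<in> orbit f g x t0"
  then obtain s where s: "s \<ge> t0" "pt f g (x s) s = pt f g k u" by (auto simp: orbit_def)
  have xn: "x s < n" using sr_lt[OF sr s(1)] .
  obtain d :: int where kd: "k = x s" "u = s + of_int d" using pt_eq[OF s(2) xn] by blast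
  define s' where "s' = s + (v - u)"
  have "x s' = x s"
  proof (rule sr_closed[OF sr s(1)])
    show "s \<le> s'" using \<open>u \<le> v\<close> by (simp add: s'_def)
    fix k w assume "s < w" "w \<le> s'"
    then have "u < w + of_int d" "w + of_int d \<le> v" using kd by (auto simp: s'_def)
    then show "\<not> Ev k w" using noev Ev_shift by blast
  qed
  moreover have "s' = v + of_int (- d)" using kd by (simp add: s'_def)
  ultimately have "pt f g (x s') s' = pt f g k v" using pt_shift[of k v "-d"] kd xn by simp
  moreover have "t0 \<le> s'" using s(1) \<open>u \<le> v\<close> by (simp add: s'_def)
  ultimately show "pt f g k v \<in> orbit f g x t0" unfolding orbit_def by (metis (mono_tags, lifting) mem_Collect_eq)
next
  assume "pt f g k v \<in> orbit f g x t0"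
  then obtain s where s: "s \<ge> t0 + (v - u)" "s \<ge> t0" "pt f g k v = pt f g (x s) s"
    using orbit_late[OF sr] by blast
  have xn: "x s < n" using sr_lt[OF sr s(2)] .
  obtain d :: int where kd: "k = x s" "v = s + of_int d" using pt_eq[OF s(3)[symmetric] xn] by blast
  define a where "a = s - (v - u)"
  have a0: "t0 \<le> a" using s by (simp add: a_def)
  have "x s = x a"
  proof (rule sr_closed[OF sr a0])
    show "a \<le> s" using \<open>u \<le> v\<close> by (simp add: a_def)
    fix k w assume "a < w" "w \<le> s"
    then have "u < w + of_int d" "w + of_int d \<le> v" using kd by (auto simp: a_def)
    then show "\<not> Ev k w" using noev Ev_shift by blast
  qed
  moreover have "a = u + of_int (- d)" using kd by (simp add: a_def)
  ultimately have "pt f g (x a) a = pt f g k u" using pt_shift[of k u "-d"] kd xn by simp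
  then show "pt f g k u \<in> orbit f g x t0" unfolding orbit_def using a0 by (metis (mono_tags, lifting) mem_Collect_eq)
qed

lemma R_cross:
  assumes sr: "shift_run c n E f g x t0 i0" and "u < v"
    and noev: "\<And>k w. u \<le> w \<Longrightarrow> w < v \<Longrightarrow> \<not> Ev k w"
  shows "pt f g k u \<in> orbit f g x t0 \<longleftrightarrow> pt f g (nxt k v) v \<in> orbit f g x t0"
proof
  assume "pt f g k u \<in> orbit f g x t0"
  then obtain s where s: "s \<ge> t0" "pt f g (x s) s = pt f g k u" by (auto simp: orbit_def)
  have xn: "x s < n" using sr_lt[OF sr s(1)] .
  obtain d :: int where kd: "k = x s" "u = s + of_int d" using pt_eq[OF s(2) xn] by blast
  define s' where "s' = s + (v - u)"
  have "x s' = nxt (x s) s'"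
  proof (rule sr_left[OF sr s(1)])
    show "s < s'" using \<open>u < v\<close> by (simp add: s'_def)
    fix k w assume "s < w" "w < s'"
    then have "u \<le> w + of_int d" "w + of_int d < v" using kd by (auto simp: s'_def)
    then show "\<not> Ev k w" using noev Ev_shift by blast
  qed
  moreover have s'v: "s' = v + of_int (- d)" using kd by (simp add: s'_def)
  ultimately have "x s' = nxt k v" using kd nxt_shift[of k v "-d"] by simp
  moreover have "nxt k v < n" using nxt_lt xn kd by simp
  ultimately have "pt f g (x s') s' = pt f g (nxt k v) v" using pt_shift[of "nxt k v" v "-d"] s'v by simp
  moreover have "t0 \<le> s'" using s(1) \<open>u < v\<close> by (simp add: s'_def)
  ultimately show "pt f g (nxt k v) v \<in> orbit f g x t0" unfolding orbit_def by (metis (mono_tags, lifting) mem_Collect_eq)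
next
  assume "pt f g (nxt k v) v \<in> orbit f g x t0"
  then obtain s where s: "s \<ge> t0 + (v - u)" "s \<ge> t0" "pt f g (nxt k v) v = pt f g (x s) s"
    using orbit_late[OF sr] by blast
  have xn: "x s < n" using sr_lt[OF sr s(2)] .
  obtain d :: int where kd: "nxt k v = x s" "v = s + of_int d" using pt_eq[OF s(3)[symmetric] xn] by blast
  define a where "a = s - (v - u)"
  have a0: "t0 \<le> a" using s by (simp add: a_def)
  have "x s = nxt (x a) s"
  proof (rule sr_left[OF sr a0])
    show "a < s" using \<open>u < v\<close> by (simp add: a_def)
    fix k w assume "a < w" "w < s"
    then have "u \<le> w + of_int d" "w + of_int d < v" using kd by (auto simp: a_def)
    then show "\<not> Ev k w" using noev Ev_shift by blast
  qed
  then have "nxt k v = nxt (x a) v" using kd nxt_shift[of "x a" s d] by simp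
  then have xa: "x a = k" using nxt_inj by metis
  have xan: "x a < n" using sr_lt[OF sr a0] .
  moreover have "a = u + of_int (- d)" using kd by (simp add: a_def)
  ultimately have "pt f g (x a) a = pt f g k u" using pt_shift[of k u "-d"] xa by simp
  then show "pt f g k u \<in> orbit f g x t0" unfolding orbit_def using a0 by (metis (mono_tags, lifting) mem_Collect_eq)
qed

end

context scs begin

definition Kset :: "(real \<Rightarrow> nat) \<Rightarrow> real \<Rightarrow> real \<Rightarrow> nat set" where
  "Kset x t0 t = {k. pt f g k t \<in> orbit f g x t0}"

lemma Kset_sub:
  assumes sr: "shift_run c n E f g x t0 i0" and per: "\<forall>s\<ge>t0. x (s + real l) = x s" and l: "l > 0"
  shows "Kset x t0 t \<subseteq> (\<lambda>m. x (t + of_int \<lceil>t0 - t\<rceil> + real m)) ` {..<l}"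
proof
  define s0 where "s0 = t + of_int \<lceil>t0 - t\<rceil>"
  fix k assume "k \<in> Kset x t0 t"
  then obtain s where s: "s \<ge> t0" "pt f g (x s) s = pt f g k t" by (auto simp: Kset_def orbit_def)
  have xn: "x s < n" using sr_lt[OF sr s(1)] .
  obtain d :: int where kd: "k = x s" "t = s + of_int d" using pt_eq[OF s(2) xn] by blast
  have "of_int (- d) \<ge> t0 - t" using s kd by simp
  then have ce: "- d \<ge> \<lceil>t0 - t\<rceil>" by (simp add: ceiling_le_iff)
  define e where "e = nat (- d - \<lceil>t0 - t\<rceil>)"
  have se: "s = s0 + real e" using ce kd by (simp add: e_def s0_def)
  define m where "m = e mod l"
  define q where "q = e div l"
  have emq: "e = m + q * l" by (simp add: m_def q_def)
  have s00: "s0 \<ge> t0" unfolding s0_def by (smt (verit) le_of_int_ceiling)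
  have "x (s0 + real m + real (q * l)) = x (s0 + real m)"
    by (rule sr_period_mult[OF sr per]) (use s00 in simp)
  moreover have "s0 + real m + real (q * l) = s" using se emq by simp
  ultimately have "k = x (s0 + real m)" using kd by simp
  moreover have "m < l" using l by (simp add: m_def)
  ultimately show "k \<in> (\<lambda>m. x (t + of_int \<lceil>t0 - t\<rceil> + real m)) ` {..<l}" unfolding s0_def by blast
qed

lemma Kset_card_le:
  assumes sr: "shift_run c n E f g x t0 i0" and per: "\<forall>s\<ge>t0. x (s + real l) = x s" and l: "l > 0"
  shows "finite (Kset x t0 t) \<and> card (Kset x t0 t) \<le> l"
proof -
  have sub: "Kset x t0 t \<subseteq> (\<lambda>m. x (t + of_int \<lceil>t0 - t\<rceil> + real m)) ` {..<l}"
    by (rule Kset_sub[OF sr per l])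
  then have "card (Kset x t0 t) \<le> card ((\<lambda>m. x (t + of_int \<lceil>t0 - t\<rceil> + real m)) ` {..<l})"
    by (intro card_mono) auto
  also have "\<dots> \<le> l" using card_image_le[of "{..<l}"] by simp
  finally show ?thesis using sub finite_subset by blast
qed

lemma Kset_card_eq:
  assumes sr: "shift_run c n E f g x t0 i0" and per: "\<forall>s\<ge>t0. x (s + real l) = x s" and l: "l > 0"
    and minim: "\<forall>s. 0 < s \<and> s < real l \<longrightarrow> pt f g (x (t0 + s)) (t0 + s) \<noteq> pt f g i0 t0"
  shows "card (Kset x t0 t) = l"
proof -
  define s0 where "s0 = t + of_int \<lceil>t0 - t\<rceil>"
  have s00: "s0 \<ge> t0" unfolding s0_def by (smt (verit) le_of_int_ceiling)
  have s01: "s0 < t0 + 1" unfolding s0_def by (smt (verit) ceiling_correct)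
  have x0: "x t0 = i0" by (rule sr_start[OF sr])
  have sub: "Kset x t0 t \<subseteq> (\<lambda>m. x (s0 + real m)) ` {..<l}"
    unfolding s0_def by (rule Kset_sub[OF sr per l])
  have sup: "(\<lambda>m. x (s0 + real m)) ` {..<l} \<subseteq> Kset x t0 t"
  proof
    fix k assume "k \<in> (\<lambda>m. x (s0 + real m)) ` {..<l}"
    then obtain m where m: "k = x (s0 + real m)" by blast
    have kn: "k < n" using sr_lt[OF sr, of "s0 + real m"] s00 m by simp
    have "s0 + real m = t + of_int (\<lceil>t0 - t\<rceil> + int m)" by (simp add: s0_def)
    then have "pt f g k (s0 + real m) = pt f g k t" using pt_shift[OF kn, of t "\<lceil>t0 - t\<rceil> + int m"] by (simp add: add.assoc)
    moreover have "t0 \<le> s0 + real m" using s00 by simp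
    ultimately show "k \<in> Kset x t0 t" unfolding Kset_def orbit_def using m
      by (metis (mono_tags, lifting) mem_Collect_eq)
  qed
  have inj: "inj_on (\<lambda>m. x (s0 + real m)) {..<l}"
  proof (rule ccontr)
    assume "\<not> inj_on (\<lambda>m. x (s0 + real m)) {..<l}"
    then obtain m1 m2 where mm: "m1 < l" "m2 < l" "m1 \<noteq> m2" "x (s0 + real m1) = x (s0 + real m2)"
      unfolding inj_on_def by blast
    have "\<exists>p q. p < q \<and> q < l \<and> x (s0 + real p) = x (s0 + real q)"
    proof (cases "m1 < m2")
      case True then show ?thesis using mm by blast
    next
      case False then have "m2 < m1" using mm by simp
      then show ?thesis using mm by (intro exI[of _ m2] exI[of _ m1]) simp
    qed
    then obtain p q where pq: "p < q" "q < l" "x (s0 + real p) = x (s0 + real q)" by blast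
    define d where "d = q - p"
    have y: "shift_run c n E f g (\<lambda>s. x (s + of_int (int d))) (t0 - of_int (int d)) i0"
      by (rule sr_time_shift[OF sr])
    have qd: "real q = real p + real d" using pq by (simp add: d_def)
    have eqs: "\<And>s. s0 + real p \<le> s \<Longrightarrow> x (s + real d) = x s"
    proof -
      fix s assume "s0 + real p \<le> s"
      then show "x (s + real d) = x s"
        using sr_uniq[OF y sr, of "s0 + real p" s] s00 pq qd by (simp add: add.assoc)
    qed
    define s' where "s' = t0 + (real l - real d)"
    have "s0 + real p \<le> s'" using s01 pq by (simp add: s'_def d_def)
    then have "x (s' + real d) = x s'" by (rule eqs)
    moreover have "s' + real d = t0 + real l" by (simp add: s'_def)
    moreover have "x (t0 + real l) = i0" using per x0 by simp
    ultimately have xs': "x s' = i0" by simp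
    have i0n: "i0 < n" using sr_lt[OF sr, of t0] x0 by simp
    have "s' = t0 + of_int (int l - int d)" using pq by (simp add: s'_def d_def)
    then have "pt f g i0 s' = pt f g i0 t0" using pt_shift[OF i0n, of t0 "int l - int d"] by metis
    then have "pt f g (x s') s' = pt f g i0 t0" using xs' by simp
    moreover have "0 < real l - real d" "real l - real d < real l" using pq by (auto simp: d_def)
    ultimately show False using minim by (simp add: s'_def)
  qed
  have "Kset x t0 t = (\<lambda>m. x (s0 + real m)) ` {..<l}" using sub sup by blast
  then show ?thesis using card_image[OF inj] by simp
qed

end

locale prun = scs +
  fixes R :: "nat set" and init :: "nat \<Rightarrow> nat" and pos :: "nat \<Rightarrow> real \<Rightarrow> nat"
  assumes PR: "partial_SCS_run c n E f g R init pos"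
begin

lemma finR: "finite R" using PR by (simp add: partial_SCS_run_def)
lemma inj_init: "inj_on init R" using PR by (simp add: partial_SCS_run_def)
lemma init_lt: "r \<in> R \<Longrightarrow> init r < n" using PR by (auto simp: partial_SCS_run_def)
lemma pos_lt: "r \<in> R \<Longrightarrow> 0 \<le> t \<Longrightarrow> pos r t < n" using PR by (simp add: partial_SCS_run_def)
lemma pos_rc: "r \<in> R \<Longrightarrow> 0 \<le> t \<Longrightarrow> right_const (pos r) t" using PR by (simp add: partial_SCS_run_def)
lemma pos_lc: "r \<in> R \<Longrightarrow> 0 < t \<Longrightarrow> \<exists>i. left_const (pos r) t i" using PR by (simp add: partial_SCS_run_def)

definition pr :: "nat \<Rightarrow> real \<Rightarrow> nat" where
  "pr r t = (if t = 0 then init r else (THE i. left_const (pos r) t i))"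

lemma pr_lc: "r \<in> R \<Longrightarrow> 0 < t \<Longrightarrow> left_const (pos r) t (pr r t)"
proof -
  assume "r \<in> R" "0 < t"
  then obtain i where i: "left_const (pos r) t i" using pos_lc by blast
  then have "(THE i. left_const (pos r) t i) = i" using lc_unique by blast
  then show ?thesis using i \<open>0 < t\<close> by (simp add: pr_def)
qed

lemma pr0: "pr r 0 = init r" by (simp add: pr_def)

lemma prior_pr: "r \<in> R \<Longrightarrow> 0 \<le> t \<Longrightarrow> prior init pos r t i \<longleftrightarrow> i = pr r t"
  unfolding prior_def using pr_lc lc_unique by (cases "t = 0") (auto simp: pr0)

lemma ms_iff:
  assumes "0 \<le> t"
  shows "may_shift c E f g R init pos t i j \<longleftrightarrow> Ev i t \<and> j = nxt i t \<and> j \<notin> (\<lambda>r. pr r t) ` R"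
proof
  assume ms: "may_shift c E f g R init pos t i j"
  then have e: "(i, j) \<in> E" "angeq (sched f g i t) (linkpos c i j)" by (auto simp: may_shift_def)
  then have "Ev i t" "j = nxt i t" using nxt_unique by (auto simp: Ev_def)
  moreover have "j \<notin> (\<lambda>r. pr r t) ` R"
  proof
    assume "j \<in> (\<lambda>r. pr r t) ` R"
    then obtain r' where "r' \<in> R" "j = pr r' t" by blast
    then have "prior init pos r' t j" using prior_pr assms by simp
    moreover have "angeq (sched f g j t) (linkpos c j i)" using sync[OF e(1)] e(2) by simp
    ultimately show False using ms \<open>r' \<in> R\<close> by (auto simp: may_shift_def)
  qed
  ultimately show "Ev i t \<and> j = nxt i t \<and> j \<notin> (\<lambda>r. pr r t) ` R" by simp
next
  assume a: "Ev i t \<and> j = nxt i t \<and> j \<notin> (\<lambda>r. pr r t) ` R"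
  then have e: "(i, j) \<in> E" "angeq (sched f g i t) (linkpos c i j)" using Ev_nxt by auto
  have "\<not> (\<exists>r'\<in>R. prior init pos r' t j \<and> angeq (sched f g j t) (linkpos c j i))"
    using a prior_pr assms by force
  then show "may_shift c E f g R init pos t i j" using e by (simp add: may_shift_def)
qed

definition rstep :: "real \<Rightarrow> nat \<Rightarrow> nat" where
  "rstep t i = (if Ev i t \<and> nxt i t \<notin> (\<lambda>r. pr r t) ` R then nxt i t else i)"

lemma pos_step: "r \<in> R \<Longrightarrow> 0 \<le> t \<Longrightarrow> pos r t = rstep t (pr r t)"
proof -
  assume r: "r \<in> R" "0 \<le> t"
  have pri: "prior init pos r t (pr r t)" using prior_pr r by simp
  have rule: "((\<exists>j. may_shift c E f g R init pos t (pr r t) j) \<longrightarrow> may_shift c E f g R init pos t (pr r t) (pos r t)) \<and>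
        ((\<not> (\<exists>j. may_shift c E f g R init pos t (pr r t) j)) \<longrightarrow> pos r t = pr r t)"
    using PR r pri unfolding partial_SCS_run_def by blast
  show ?thesis
  proof (cases "Ev (pr r t) t \<and> nxt (pr r t) t \<notin> (\<lambda>r. pr r t) ` R")
    case True
    then have "\<exists>j. may_shift c E f g R init pos t (pr r t) j" using ms_iff r by blast
    then have "may_shift c E f g R init pos t (pr r t) (pos r t)" using rule by blast
    then have pn: "pos r t = nxt (pr r t) t" using ms_iff[OF r(2)] by blast
    have rs: "rstep t (pr r t) = nxt (pr r t) t" unfolding rstep_def using True by (rule if_P)
    show ?thesis by (subst rs) (rule pn)
  next
    case False
    have "\<not> (\<exists>j. may_shift c E f g R init pos t (pr r t) j)"
    proof
      assume "\<exists>j. may_shift c E f g R init pos t (pr r t) j"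
      then obtain j where "may_shift c E f g R init pos t (pr r t) j" by blast
      then have "Ev (pr r t) t \<and> j = nxt (pr r t) t \<and> j \<notin> (\<lambda>r. pr r t) ` R" using ms_iff[OF r(2)] by blast
      then show False using False by blast
    qed
    then have pn: "pos r t = pr r t" using rule by blast
    have rs: "rstep t (pr r t) = pr r t" unfolding rstep_def using False by (rule if_not_P)
    show ?thesis by (subst rs) (rule pn)
  qed
qed

lemma pr_lt: "r \<in> R \<Longrightarrow> 0 \<le> t \<Longrightarrow> pr r t < n"
proof -
  assume r: "r \<in> R" "0 \<le> t"
  show ?thesis
  proof (cases "t = 0")
    case True then show ?thesis using init_lt r by (simp add: pr0)
  next
    case False
    then have t: "0 < t" using r by simp
    have ev: "eventually (\<lambda>s. pos r s = pr r t) (at_left t)" using pr_lc[OF r(1) t] by (simp add: lc_ev)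
    obtain s where s: "0 < s" "s < t" "pos r s = pr r t" by (rule ev_left_point[OF ev t])
    then show ?thesis using pos_lt[OF r(1), of s] by simp
  qed
qed

lemma pr_from_pos:
  assumes "0 < t"
  obtains d where "d > 0" "d \<le> t" "\<And>s. t - d < s \<Longrightarrow> s < t \<Longrightarrow> \<forall>r\<in>R. pos r s = pr r t"
proof -
  have "\<forall>r\<in>R. eventually (\<lambda>s. pos r s = pr r t) (at_left t)" using pr_lc assms by (simp add: lc_ev)
  then have ev: "eventually (\<lambda>s. \<forall>r\<in>R. pos r s = pr r t) (at_left t)" by (rule eventually_ball_finite[OF finR])
  obtain d where d: "d > 0" "\<And>s. t - d < s \<Longrightarrow> s < t \<Longrightarrow> \<forall>r\<in>R. pos r s = pr r t"
    using ev_left_interval[OF ev] by blast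
  show ?thesis using d assms by (intro that[of "min d t"]) auto
qed

lemma pos_right:
  assumes "0 \<le> t"
  obtains d where "d > 0" "\<And>s. t \<le> s \<Longrightarrow> s < t + d \<Longrightarrow> \<forall>r\<in>R. pos r s = pos r t"
proof -
  have "\<forall>r\<in>R. eventually (\<lambda>s. pos r s = pos r t) (at_right t)" using pos_rc assms by (simp add: rc_ev)
  then have ev: "eventually (\<lambda>s. \<forall>r\<in>R. pos r s = pos r t) (at_right t)" by (rule eventually_ball_finite[OF finR])
  obtain d where d: "d > 0" "\<And>s. t < s \<Longrightarrow> s < t + d \<Longrightarrow> \<forall>r\<in>R. pos r s = pos r t"
    using ev_right_interval[OF ev] by blast
  show ?thesis
  proof (rule that[of d])
    fix s assume "t \<le> s" "s < t + d"
    then show "\<forall>r\<in>R. pos r s = pos r t" using d by (cases "s = t") auto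
  qed (rule d(1))
qed

lemma inj_step:
  assumes t: "0 \<le> t" and inj: "inj_on (\<lambda>r. pr r t) R"
  shows "inj_on (\<lambda>r. pos r t) R"
proof (rule inj_onI)
  fix r1 r2 assume r: "r1 \<in> R" "r2 \<in> R" "pos r1 t = pos r2 t"
  define i1 where "i1 = pr r1 t"
  define i2 where "i2 = pr r2 t"
  have p1: "pos r1 t = rstep t i1" "pos r2 t = rstep t i2"
    unfolding i1_def i2_def by (rule pos_step[OF r(1) t], rule pos_step[OF r(2) t])
  define PP where "PP = (\<lambda>r. pr r t) ` R"
  have in1: "i1 \<in> PP" "i2 \<in> PP" using r by (auto simp: i1_def i2_def PP_def)
  have rs: "\<And>i. rstep t i = (if Ev i t \<and> nxt i t \<notin> PP then nxt i t else i)"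
    unfolding rstep_def PP_def by (rule refl)
  have "i1 = i2"
  proof (cases "Ev i1 t \<and> nxt i1 t \<notin> PP")
    case c1: True
    show ?thesis
    proof (cases "Ev i2 t \<and> nxt i2 t \<notin> PP")
      case True
      then have "nxt i1 t = nxt i2 t" using c1 p1 r(3) rs by metis
      then show ?thesis by (rule nxt_inj)
    next
      case False
      then have "nxt i1 t = i2" using c1 p1 r(3) rs by metis
      then show ?thesis using c1 in1 by simp
    qed
  next
    case c1: False
    show ?thesis
    proof (cases "Ev i2 t \<and> nxt i2 t \<notin> PP")
      case True
      then have "i1 = nxt i2 t" using c1 p1 r(3) rs by metis
      then show ?thesis using True in1 by simp
    next
      case False
      then show "i1 = i2" using c1 p1 r(3) rs by metis
    qed
  qed
  then show "r1 = r2" using inj r unfolding i1_def i2_def inj_on_def by blast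
qed

lemma pos_inj: "0 \<le> t \<Longrightarrow> inj_on (\<lambda>r. pos r t) R"
proof (rule real_induct[of 0 "\<lambda>t. inj_on (\<lambda>r. pos r t) R"])
  fix \<sigma> :: real assume s0: "0 \<le> \<sigma>" and IH: "\<And>s. 0 \<le> s \<Longrightarrow> s < \<sigma> \<Longrightarrow> inj_on (\<lambda>r. pos r s) R"
  have "inj_on (\<lambda>r. pr r \<sigma>) R"
  proof (cases "\<sigma> = 0")
    case True then show ?thesis using inj_init by (simp add: pr0)
  next
    case False
    then have sp: "0 < \<sigma>" using s0 by simp
    obtain d where d: "d > 0" "d \<le> \<sigma>" "\<And>s. \<sigma> - d < s \<Longrightarrow> s < \<sigma> \<Longrightarrow> \<forall>r\<in>R. pos r s = pr r \<sigma>"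
      using pr_from_pos[OF sp] by blast
    define s where "s = \<sigma> - d / 2"
    have ss: "\<sigma> - d < s" "s < \<sigma>" "0 \<le> s" using d by (auto simp: s_def)
    have "inj_on (\<lambda>r. pos r s) R" using IH ss by simp
    moreover have "\<forall>r\<in>R. pos r s = pr r \<sigma>" using d(3)[of s] ss by blast
    ultimately show ?thesis unfolding inj_on_def by metis
  qed
  then have injs: "inj_on (\<lambda>r. pos r \<sigma>) R" by (rule inj_step[OF s0])
  obtain d where d: "d > 0" "\<And>s. \<sigma> \<le> s \<Longrightarrow> s < \<sigma> + d \<Longrightarrow> \<forall>r\<in>R. pos r s = pos r \<sigma>"
    using pos_right[OF s0] by blast
  show "\<exists>\<delta>>0. \<forall>s. \<sigma> \<le> s \<and> s < \<sigma> + \<delta> \<longrightarrow> inj_on (\<lambda>r. pos r s) R"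
  proof (intro exI[of _ d] conjI allI impI)
    fix s assume "\<sigma> \<le> s \<and> s < \<sigma> + d"
    then have "\<forall>r\<in>R. pos r s = pos r \<sigma>" using d(2)[of s] by blast
    then show "inj_on (\<lambda>r. pos r s) R" using injs unfolding inj_on_def by metis
  qed (rule d(1))
qed

lemma pr_inj: "0 \<le> t \<Longrightarrow> inj_on (\<lambda>r. pr r t) R"
proof (cases "t = 0")
  case True then show ?thesis using inj_init by (simp add: pr0)
next
  case False
  assume "0 \<le> t"
  then have sp: "0 < t" using False by simp
  obtain d where d: "d > 0" "d \<le> t" "\<And>s. t - d < s \<Longrightarrow> s < t \<Longrightarrow> \<forall>r\<in>R. pos r s = pr r t"
    using pr_from_pos[OF sp] by blast
  define s where "s = t - d / 2"
  have ss: "t - d < s" "s < t" "0 \<le> s" using d by (auto simp: s_def)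
  have "inj_on (\<lambda>r. pos r s) R" using pos_inj ss by simp
  moreover have "\<forall>r\<in>R. pos r s = pr r t" using d(3)[of s] ss by blast
  ultimately show ?thesis unfolding inj_on_def by metis
qed

lemma full_pos:
  assumes full: "init ` R = {..<n}"
  shows "0 \<le> t \<Longrightarrow> \<forall>r\<in>R. pos r t = init r"
proof (rule real_induct[of 0 "\<lambda>t. \<forall>r\<in>R. pos r t = init r"])
  fix \<sigma> :: real assume s0: "0 \<le> \<sigma>" and IH: "\<And>s. 0 \<le> s \<Longrightarrow> s < \<sigma> \<Longrightarrow> \<forall>r\<in>R. pos r s = init r"
  have prs: "\<forall>r\<in>R. pr r \<sigma> = init r"
  proof (cases "\<sigma> = 0")
    case True then show ?thesis by (simp add: pr0)
  next
    case False
    then have sp: "0 < \<sigma>" using s0 by simp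
    obtain d where d: "d > 0" "d \<le> \<sigma>" "\<And>s. \<sigma> - d < s \<Longrightarrow> s < \<sigma> \<Longrightarrow> \<forall>r\<in>R. pos r s = pr r \<sigma>"
      using pr_from_pos[OF sp] by blast
    define s where "s = \<sigma> - d / 2"
    have ss: "\<sigma> - d < s" "s < \<sigma>" "0 \<le> s" using d by (auto simp: s_def)
    have "\<forall>r\<in>R. pos r s = init r" using IH ss by simp
    moreover have "\<forall>r\<in>R. pos r s = pr r \<sigma>" using d(3)[of s] ss by blast
    ultimately show ?thesis by simp
  qed
  then have img: "(\<lambda>r. pr r \<sigma>) ` R = {..<n}" using full by (simp cong: image_cong)
  have at: "\<forall>r\<in>R. pos r \<sigma> = init r"
  proof
    fix r assume r: "r \<in> R"
    have "pos r \<sigma> = rstep \<sigma> (pr r \<sigma>)" using pos_step r s0 by simp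
    also have "\<dots> = pr r \<sigma>"
      using img nxt_lt pr_lt[OF r s0] unfolding rstep_def by auto
    finally show "pos r \<sigma> = init r" using prs r by simp
  qed
  obtain d where d: "d > 0" "\<And>s. \<sigma> \<le> s \<Longrightarrow> s < \<sigma> + d \<Longrightarrow> \<forall>r\<in>R. pos r s = pos r \<sigma>"
    using pos_right[OF s0] by blast
  show "\<exists>\<delta>>0. \<forall>s. \<sigma> \<le> s \<and> s < \<sigma> + \<delta> \<longrightarrow> (\<forall>r\<in>R. pos r s = init r)"
  proof (intro exI[of _ d] conjI allI impI)
    fix s assume "\<sigma> \<le> s \<and> s < \<sigma> + d"
    then have "\<forall>r\<in>R. pos r s = pos r \<sigma>" using d(2)[of s] by blast
    then show "\<forall>r\<in>R. pos r s = init r" using at by simp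
  qed (rule d(1))
qed

end

context prun begin

definition blocked :: "real \<Rightarrow> nat \<Rightarrow> bool" where
  "blocked \<sigma> r \<longleftrightarrow> Ev (pr r \<sigma>) \<sigma> \<and> nxt (pr r \<sigma>) \<sigma> \<in> (\<lambda>r. pr r \<sigma>) ` R"

definition partner :: "real \<Rightarrow> nat \<Rightarrow> nat" where
  "partner \<sigma> r = (if blocked \<sigma> r then (THE r'. r' \<in> R \<and> pr r' \<sigma> = nxt (pr r \<sigma>) \<sigma>) else r)"

lemma partner_blocked:
  assumes s: "0 \<le> \<sigma>" and r: "r \<in> R" and b: "blocked \<sigma> r"
  shows "partner \<sigma> r \<in> R \<and> pr (partner \<sigma> r) \<sigma> = nxt (pr r \<sigma>) \<sigma>"
proof -
  obtain r' where r': "r' \<in> R" "pr r' \<sigma> = nxt (pr r \<sigma>) \<sigma>" using b unfolding blocked_def by force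
  have u: "\<And>r''. r'' \<in> R \<and> pr r'' \<sigma> = nxt (pr r \<sigma>) \<sigma> \<Longrightarrow> r'' = r'"
    using pr_inj[OF s] r' unfolding inj_on_def by metis
  have "(THE r'. r' \<in> R \<and> pr r' \<sigma> = nxt (pr r \<sigma>) \<sigma>) = r'"
    by (rule the_equality[where P="\<lambda>r'. r' \<in> R \<and> pr r' \<sigma> = nxt (pr r \<sigma>) \<sigma>", OF conjI[OF r'(1) r'(2)] u])
  then show ?thesis using b r' by (simp add: partner_def)
qed

lemma partner_in: "0 \<le> \<sigma> \<Longrightarrow> r \<in> R \<Longrightarrow> partner \<sigma> r \<in> R"
  using partner_blocked by (cases "blocked \<sigma> r") (auto simp: partner_def)

lemma partner_pos:
  assumes s: "0 \<le> \<sigma>" and r: "r \<in> R"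
  shows "pos r \<sigma> = nxt (pr (partner \<sigma> r) \<sigma>) \<sigma>"
proof (cases "blocked \<sigma> r")
  case True
  have "pos r \<sigma> = rstep \<sigma> (pr r \<sigma>)" by (rule pos_step[OF r s])
  also have "\<dots> = pr r \<sigma>" using True unfolding rstep_def blocked_def by auto
  also have "\<dots> = nxt (nxt (pr r \<sigma>) \<sigma>) \<sigma>" using Ev_sym True unfolding blocked_def by auto
  also have "\<dots> = nxt (pr (partner \<sigma> r) \<sigma>) \<sigma>" using partner_blocked[OF s r True] by simp
  finally show ?thesis .
next
  case False
  have "pos r \<sigma> = rstep \<sigma> (pr r \<sigma>)" by (rule pos_step[OF r s])
  also have "\<dots> = nxt (pr r \<sigma>) \<sigma>" using False unfolding rstep_def blocked_def
    by (auto simp: nxt_noEv)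
  finally show ?thesis using False by (simp add: partner_def)
qed

lemma partner_invol:
  assumes s: "0 \<le> \<sigma>" and r: "r \<in> R"
  shows "partner \<sigma> (partner \<sigma> r) = r"
proof (cases "blocked \<sigma> r")
  case True
  define r' where "r' = partner \<sigma> r"
  have r': "r' \<in> R" "pr r' \<sigma> = nxt (pr r \<sigma>) \<sigma>" using partner_blocked[OF s r True] by (auto simp: r'_def)
  have ev: "Ev (pr r \<sigma>) \<sigma>" using True by (simp add: blocked_def)
  have e2: "Ev (pr r' \<sigma>) \<sigma>" "nxt (pr r' \<sigma>) \<sigma> = pr r \<sigma>" using Ev_sym[OF ev] r' by auto
  then have b': "blocked \<sigma> r'" unfolding blocked_def using r by auto
  have "partner \<sigma> r' \<in> R \<and> pr (partner \<sigma> r') \<sigma> = pr r \<sigma>" using partner_blocked[OF s r'(1) b'] e2 by simp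
  then have "partner \<sigma> r' = r" using pr_inj[OF s] r unfolding inj_on_def by metis
  then show ?thesis by (simp add: r'_def)
next
  case False
  then show ?thesis by (simp add: partner_def)
qed

lemma card_partner:
  assumes s: "0 \<le> \<sigma>"
  shows "card {r \<in> R. pt f g (pos r \<sigma>) \<sigma> \<in> P} = card {r \<in> R. pt f g (nxt (pr r \<sigma>) \<sigma>) \<sigma> \<in> P}"
proof -
  define A where "A = {r \<in> R. pt f g (nxt (pr r \<sigma>) \<sigma>) \<sigma> \<in> P}"
  define B where "B = {r \<in> R. pt f g (pos r \<sigma>) \<sigma> \<in> P}"
  have eqv: "(pt f g (pos r \<sigma>) \<sigma> \<in> P) = (partner \<sigma> r \<in> A)" if r: "r \<in> R" for r
  proof -
    have "partner \<sigma> r \<in> A \<longleftrightarrow> pt f g (nxt (pr (partner \<sigma> r) \<sigma>) \<sigma>) \<sigma> \<in> P"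
      unfolding A_def using partner_in[OF s r] by blast
    moreover have "pos r \<sigma> = nxt (pr (partner \<sigma> r) \<sigma>) \<sigma>" by (rule partner_pos[OF s r])
    ultimately show ?thesis by argo
  qed
  have B: "B = {r \<in> R. partner \<sigma> r \<in> A}"
  proof (rule set_eqI)
    fix r
    show "r \<in> B \<longleftrightarrow> r \<in> {r \<in> R. partner \<sigma> r \<in> A}"
    proof (cases "r \<in> R")
      case True then show ?thesis unfolding B_def using eqv[OF True] by simp
    qed (simp add: B_def)
  qed
  have "bij_betw (partner \<sigma>) B A"
  proof (rule bij_betw_imageI)
    show "inj_on (partner \<sigma>) B"
    proof (rule inj_onI)
      fix a b assume "a \<in> B" "b \<in> B" "partner \<sigma> a = partner \<sigma> b"
      then have "a \<in> R" "b \<in> R" "partner \<sigma> (partner \<sigma> a) = partner \<sigma> (partner \<sigma> b)" using B by auto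
      then show "a = b" using partner_invol[OF s] by metis
    qed
    show "partner \<sigma> ` B = A"
    proof
      show "partner \<sigma> ` B \<subseteq> A" using B by auto
      show "A \<subseteq> partner \<sigma> ` B"
      proof
        fix a assume a: "a \<in> A"
        then have aR: "a \<in> R" by (simp add: A_def)
        have "partner \<sigma> (partner \<sigma> a) \<in> A" using a partner_invol[OF s aR] by simp
        then have "partner \<sigma> a \<in> B" using B partner_in[OF s aR] by blast
        moreover have "a = partner \<sigma> (partner \<sigma> a)" using partner_invol[OF s aR] by simp
        ultimately show "a \<in> partner \<sigma> ` B" by blast
      qed
    qed
  qed
  then show ?thesis unfolding A_def[symmetric] B_def[symmetric] by (rule bij_betw_same_card)
qed

lemma card_right:
  assumes sr: "shift_run c n E f g x t0 i0" and s0: "0 \<le> \<sigma>"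
  shows "\<exists>d>0. \<forall>s. \<sigma> \<le> s \<and> s < \<sigma> + d \<longrightarrow>
            card (robots_in f g R pos (orbit f g x t0) s) = card (robots_in f g R pos (orbit f g x t0) \<sigma>)"
proof -
  obtain d1 where d1: "d1 > 0" "\<forall>k w. w \<noteq> \<sigma> \<and> \<bar>w - \<sigma>\<bar> < d1 \<longrightarrow> \<not> Ev k w"
    using events_isolated by blast
  obtain d2 where d2: "d2 > 0" "\<And>s. \<sigma> \<le> s \<Longrightarrow> s < \<sigma> + d2 \<Longrightarrow> \<forall>r\<in>R. pos r s = pos r \<sigma>"
    using pos_right[OF s0] by blast
  show ?thesis
  proof (intro exI[of _ "min d1 d2"] conjI allI impI)
    fix s assume s: "\<sigma> \<le> s \<and> s < \<sigma> + min d1 d2"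
    have "\<And>r. r \<in> R \<Longrightarrow> pt f g (pos r s) s \<in> orbit f g x t0 \<longleftrightarrow> pt f g (pos r \<sigma>) \<sigma> \<in> orbit f g x t0"
    proof -
      fix r assume r: "r \<in> R"
      have "pos r s = pos r \<sigma>" using d2(2)[of s] s r by auto
      moreover have "pt f g (pos r \<sigma>) \<sigma> \<in> orbit f g x t0 \<longleftrightarrow> pt f g (pos r \<sigma>) s \<in> orbit f g x t0"
      proof (rule R_flat[OF sr])
        show "\<sigma> \<le> s" using s by simp
        fix k w assume "\<sigma> < w" "w \<le> s"
        then show "\<not> Ev k w" using d1(2) s by auto
      qed
      ultimately show "?thesis r" by simp
    qed
    then have "robots_in f g R pos (orbit f g x t0) s = robots_in f g R pos (orbit f g x t0) \<sigma>"
      unfolding robots_in_def by blast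
    then show "card (robots_in f g R pos (orbit f g x t0) s) = card (robots_in f g R pos (orbit f g x t0) \<sigma>)"
      by simp
  qed (use d1 d2 in simp)
qed

lemma card_left:
  assumes sr: "shift_run c n E f g x t0 i0" and sp: "0 < \<sigma>"
  shows "\<exists>u. 0 \<le> u \<and> u < \<sigma> \<and>
            card (robots_in f g R pos (orbit f g x t0) u) = card (robots_in f g R pos (orbit f g x t0) \<sigma>)"
proof -
  have s0: "0 \<le> \<sigma>" using sp by simp
  obtain d1 where d1: "d1 > 0" "\<forall>k w. w \<noteq> \<sigma> \<and> \<bar>w - \<sigma>\<bar> < d1 \<longrightarrow> \<not> Ev k w"
    using events_isolated by blast
  obtain d2 where d2: "d2 > 0" "d2 \<le> \<sigma>" "\<And>s. \<sigma> - d2 < s \<Longrightarrow> s < \<sigma> \<Longrightarrow> \<forall>r\<in>R. pos r s = pr r \<sigma>"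
    using pr_from_pos[OF sp] by blast
  define u where "u = \<sigma> - min d1 d2 / 2"
  have u: "0 \<le> u" "u < \<sigma>" "\<sigma> - d2 < u" "\<sigma> - d1 < u" using d1 d2 by (auto simp: u_def)
  have posu: "\<forall>r\<in>R. pos r u = pr r \<sigma>" using d2(3)[of u] u by blast
  have "\<And>r. r \<in> R \<Longrightarrow> pt f g (pos r u) u \<in> orbit f g x t0 \<longleftrightarrow> pt f g (nxt (pr r \<sigma>) \<sigma>) \<sigma> \<in> orbit f g x t0"
  proof -
    fix r assume r: "r \<in> R"
    have "pt f g (pr r \<sigma>) u \<in> orbit f g x t0 \<longleftrightarrow> pt f g (nxt (pr r \<sigma>) \<sigma>) \<sigma> \<in> orbit f g x t0"
    proof (rule R_cross[OF sr])
      show "u < \<sigma>" by (rule u(2))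
      fix k w assume "u \<le> w" "w < \<sigma>"
      then show "\<not> Ev k w" using d1(2) u by auto
    qed
    then show "?thesis r" using posu r by simp
  qed
  then have "robots_in f g R pos (orbit f g x t0) u = {r \<in> R. pt f g (nxt (pr r \<sigma>) \<sigma>) \<sigma> \<in> orbit f g x t0}"
    unfolding robots_in_def by blast
  then have "card (robots_in f g R pos (orbit f g x t0) u) = card (robots_in f g R pos (orbit f g x t0) \<sigma>)"
    unfolding robots_in_def using card_partner[OF s0] by simp
  then show ?thesis using u by blast
qed

lemma card_inv:
  assumes sr: "shift_run c n E f g x t0 i0"
  shows "0 \<le> t \<Longrightarrow> card (robots_in f g R pos (orbit f g x t0) t) = card (robots_in f g R pos (orbit f g x t0) 0)"
proof (rule real_induct[of 0 "\<lambda>t. card (robots_in f g R pos (orbit f g x t0) t) = card (robots_in f g R pos (orbit f g x t0) 0)"])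
  fix \<sigma> :: real assume s0: "0 \<le> \<sigma>"
    and IH: "\<And>s. 0 \<le> s \<Longrightarrow> s < \<sigma> \<Longrightarrow> card (robots_in f g R pos (orbit f g x t0) s) = card (robots_in f g R pos (orbit f g x t0) 0)"
  have at: "card (robots_in f g R pos (orbit f g x t0) \<sigma>) = card (robots_in f g R pos (orbit f g x t0) 0)"
  proof (cases "\<sigma> = 0")
    case False
    then have "0 < \<sigma>" using s0 by simp
    then obtain u where "0 \<le> u" "u < \<sigma>" "card (robots_in f g R pos (orbit f g x t0) u) = card (robots_in f g R pos (orbit f g x t0) \<sigma>)"
      using card_left[OF sr] by blast
    then show ?thesis using IH by metis
  qed simp
  obtain d where d: "d > 0" "\<forall>s. \<sigma> \<le> s \<and> s < \<sigma> + d \<longrightarrow>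
            card (robots_in f g R pos (orbit f g x t0) s) = card (robots_in f g R pos (orbit f g x t0) \<sigma>)"
    using card_right[OF sr s0] by blast
  show "\<exists>\<delta>>0. \<forall>s. \<sigma> \<le> s \<and> s < \<sigma> + \<delta> \<longrightarrow> card (robots_in f g R pos (orbit f g x t0) s) = card (robots_in f g R pos (orbit f g x t0) 0)"
    using d at by metis
qed

end

context prun begin

lemma orbit_lt: "shift_run c n E f g x t0 i0 \<Longrightarrow> pt f g k t \<in> orbit f g x t0 \<Longrightarrow> k < n"
  unfolding orbit_def pt_def using sr_lt by force

lemma ring_data:
  assumes "ring_length c n E f g P (2 * real l * pi)" "l > 0"
  obtains x t0 i where "shift_run c n E f g x t0 i" "P = orbit f g x t0" "i < n"
    "\<forall>s\<ge>t0. x (s + real l) = x s"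
    "\<forall>s. 0 < s \<and> s < real l \<longrightarrow> pt f g (x (t0 + s)) (t0 + s) \<noteq> pt f g i t0"
proof -
  obtain i t0 x T where d: "i < n" "shift_run c n E f g x t0 i" "P = orbit f g x t0" "T > 0"
    "pt f g (x (t0 + T)) (t0 + T) = pt f g i t0"
    "\<forall>s. 0 < s \<and> s < T \<longrightarrow> pt f g (x (t0 + s)) (t0 + s) \<noteq> pt f g i t0"
    "2 * real l * pi = 2 * pi * T"
    using assms(1) unfolding ring_length_def by blast
  have T: "T = real l" using d(7) by simp
  have "x (t0 + real l) = i" using pt_eq[OF d(5)[symmetric] d(1)] T by simp
  then have "x (t0 + real l) = x t0" using sr_start[OF d(2)] by simp
  then have "\<forall>s\<ge>t0. x (s + real l) = x s" using sr_period_from[OF d(2)] by blast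
  then show ?thesis using that d T by blast
qed

lemma part2:
  assumes "ring_length c n E f g P (2 * real l * pi)" "l > 0" "0 \<le> t"
  shows "card (robots_in f g R pos P t) \<le> l"
proof -
  obtain x t0 i where d: "shift_run c n E f g x t0 i" "P = orbit f g x t0" "i < n"
    "\<forall>s\<ge>t0. x (s + real l) = x s"
    using ring_data[OF assms(1,2)] by blast
  have K: "finite (Kset x t0 t) \<and> card (Kset x t0 t) \<le> l" by (rule Kset_card_le[OF d(1) d(4) assms(2)])
  have sub: "(\<lambda>r. pos r t) ` robots_in f g R pos P t \<subseteq> Kset x t0 t"
    unfolding robots_in_def Kset_def d(2) by auto
  have inj: "inj_on (\<lambda>r. pos r t) (robots_in f g R pos P t)"
    using pos_inj[OF assms(3)] unfolding robots_in_def by (rule inj_on_subset) auto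
  have "card (robots_in f g R pos P t) = card ((\<lambda>r. pos r t) ` robots_in f g R pos P t)"
    using card_image[OF inj] by simp
  also have "\<dots> \<le> card (Kset x t0 t)" using K sub by (intro card_mono) auto
  finally show ?thesis using K by simp
qed

lemma part3:
  assumes full: "init ` R = {..<n}" and "ring_length c n E f g P (2 * real l * pi)" "l > 0" and t: "0 \<le> t"
  shows "card (robots_in f g R pos P t) = l \<and>
                 (\<forall>r\<in>robots_in f g R pos P t. \<forall>x. shift_run c n E f g x t (pos r t) \<longrightarrow>
                    (\<forall>s. 0 < s \<and> s < 1 \<longrightarrow> pt f g (x (t + s)) (t + s) \<notin> robot_points f g R pos t) \<and>
                    pt f g (x (t + 1)) (t + 1) \<in> robot_points f g R pos t)"
proof
  have posi: "\<forall>r\<in>R. pos r t = init r" using full_pos[OF full t] .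
  obtain x t0 i where d: "shift_run c n E f g x t0 i" "P = orbit f g x t0" "i < n"
    "\<forall>s\<ge>t0. x (s + real l) = x s"
    "\<forall>s. 0 < s \<and> s < real l \<longrightarrow> pt f g (x (t0 + s)) (t0 + s) \<noteq> pt f g i t0"
    using ring_data[OF assms(2,3)] by blast
  have K: "card (Kset x t0 t) = l" by (rule Kset_card_eq[OF d(1) d(4) assms(3) d(5)])
  have eq: "(\<lambda>r. pos r t) ` robots_in f g R pos P t = Kset x t0 t"
  proof
    show "(\<lambda>r. pos r t) ` robots_in f g R pos P t \<subseteq> Kset x t0 t"
      unfolding robots_in_def Kset_def d(2) by auto
    show "Kset x t0 t \<subseteq> (\<lambda>r. pos r t) ` robots_in f g R pos P t"
    proof
      fix k assume k: "k \<in> Kset x t0 t"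
      then have "k < n" using orbit_lt[OF d(1)] by (simp add: Kset_def)
      then obtain r where r: "r \<in> R" "k = init r" using full by (metis imageE lessThan_iff)
      then have "pos r t = k" using posi by simp
      moreover have "r \<in> robots_in f g R pos P t"
        using k r \<open>pos r t = k\<close> unfolding robots_in_def Kset_def d(2) by simp
      ultimately show "k \<in> (\<lambda>r. pos r t) ` robots_in f g R pos P t" by blast
    qed
  qed
  have inj: "inj_on (\<lambda>r. pos r t) (robots_in f g R pos P t)"
    using pos_inj[OF t] unfolding robots_in_def by (rule inj_on_subset) auto
  show "card (robots_in f g R pos P t) = l"
    using card_image[OF inj] eq K by simp
next
  have posi: "\<forall>r\<in>R. pos r t = init r" using full_pos[OF full t] .
  show "\<forall>r\<in>robots_in f g R pos P t. \<forall>x. shift_run c n E f g x t (pos r t) \<longrightarrow>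
                    (\<forall>s. 0 < s \<and> s < 1 \<longrightarrow> pt f g (x (t + s)) (t + s) \<notin> robot_points f g R pos t) \<and>
                    pt f g (x (t + 1)) (t + 1) \<in> robot_points f g R pos t"
  proof (intro ballI allI impI conjI)
    fix r and x :: "real \<Rightarrow> nat" and s :: real assume sr: "shift_run c n E f g x t (pos r t)" and s: "0 < s \<and> s < 1"
    show "pt f g (x (t + s)) (t + s) \<notin> robot_points f g R pos t"
    proof
      assume "pt f g (x (t + s)) (t + s) \<in> robot_points f g R pos t"
      then obtain r' where r': "r' \<in> R" "pt f g (x (t + s)) (t + s) = pt f g (pos r' t) t"
        unfolding robot_points_def by blast
      have "pos r' t < n" using pos_lt[OF r'(1) t] .
      then obtain d :: int where "t + s = t + of_int d" using pt_eq[OF r'(2)[symmetric]] by blast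
      then have "s = of_int d" by simp
      then have "(0::real) < of_int d" "of_int d < (1::real)" using s by auto
      then have "0 < d" "d < 1" by linarith+
      then show False by simp
    qed
  next
    fix r and x :: "real \<Rightarrow> nat" assume sr: "shift_run c n E f g x t (pos r t)"
    define k where "k = x (t + 1)"
    have kn: "k < n" using sr_lt[OF sr, of "t + 1"] by (simp add: k_def)
    then obtain r' where r': "r' \<in> R" "k = init r'" using full by (metis imageE lessThan_iff)
    have "pt f g k (t + of_int 1) = pt f g k t" by (rule pt_shift[OF kn])
    then have "pt f g (x (t + 1)) (t + 1) = pt f g (pos r' t) t" using posi r' by (simp add: k_def)
    then show "pt f g (x (t + 1)) (t + 1) \<in> robot_points f g R pos t"
      unfolding robot_points_def using r'(1) by blast
  qed
qed

end

theorem lemma2: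
  fixes c :: "nat \<Rightarrow> complex" and n :: nat and eps :: real and E :: "(nat \<times> nat) set"
    and f g :: "nat \<Rightarrow> real" and R :: "nat set" and init :: "nat \<Rightarrow> nat"
    and pos :: "nat \<Rightarrow> real \<Rightarrow> nat"
  assumes "SCS_setting c n eps E f g"
    and "partial_SCS_run c n E f g R init pos"
  shows "(\<forall>P. is_ring c n E f g P \<longrightarrow>
            (\<forall>t1\<ge>0. \<forall>t2\<ge>0. card (robots_in f g R pos P t1) = card (robots_in f g R pos P t2)))
       \<and> (\<forall>P (l::nat). is_ring c n E f g P \<and> l > 0 \<and> ring_length c n E f g P (2 * real l * pi) \<longrightarrow>
            (\<forall>t\<ge>0. card (robots_in f g R pos P t) \<le> l))
       \<and> (init ` R = {..<n} \<longrightarrow>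
            (\<forall>P (l::nat). is_ring c n E f g P \<and> l > 0 \<and> ring_length c n E f g P (2 * real l * pi) \<longrightarrow>
              (\<forall>t\<ge>0. card (robots_in f g R pos P t) = l \<and>
                 (\<forall>r\<in>robots_in f g R pos P t. \<forall>x. shift_run c n E f g x t (pos r t) \<longrightarrow>
                    (\<forall>s. 0 < s \<and> s < 1 \<longrightarrow> pt f g (x (t + s)) (t + s) \<notin> robot_points f g R pos t) \<and>
                    pt f g (x (t + 1)) (t + 1) \<in> robot_points f g R pos t))))"
proof -
  interpret prun c n eps E f g R init pos
    using assms by (unfold_locales) auto
  have p1: "\<forall>P. is_ring c n E f g P \<longrightarrow>
            (\<forall>t1\<ge>0. \<forall>t2\<ge>0. card (robots_in f g R pos P t1) = card (robots_in f g R pos P t2))"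
  proof (rule allI, rule impI)
    fix P' assume "is_ring c n E f g P'"
    then obtain i t0 x where sr: "shift_run c n E f g x t0 i" and P': "P' = orbit f g x t0"
      unfolding is_ring_def by blast
    show "\<forall>t1\<ge>0. \<forall>t2\<ge>0. card (robots_in f g R pos P' t1) = card (robots_in f g R pos P' t2)"
    proof (intro allI impI)
      fix t1 t2 :: real assume "0 \<le> t1" "0 \<le> t2"
      then show "card (robots_in f g R pos P' t1) = card (robots_in f g R pos P' t2)"
        using card_inv[OF sr, of t1] card_inv[OF sr, of t2] P' by simp
    qed
  qed
  show ?thesis
  proof (intro conjI)
    show "\<forall>P. is_ring c n E f g P \<longrightarrow>
            (\<forall>t1\<ge>0. \<forall>t2\<ge>0. card (robots_in f g R pos P t1) = card (robots_in f g R pos P t2))" by (rule p1)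
    show "\<forall>P (l::nat). is_ring c n E f g P \<and> l > 0 \<and> ring_length c n E f g P (2 * real l * pi) \<longrightarrow>
            (\<forall>t\<ge>0. card (robots_in f g R pos P t) \<le> l)"
    proof (intro allI impI)
      fix P and l :: nat and t :: real
      assume "is_ring c n E f g P \<and> l > 0 \<and> ring_length c n E f g P (2 * real l * pi)" "0 \<le> t"
      then show "card (robots_in f g R pos P t) \<le> l" using part2 by blast
    qed
    show "init ` R = {..<n} \<longrightarrow>
            (\<forall>P (l::nat). is_ring c n E f g P \<and> l > 0 \<and> ring_length c n E f g P (2 * real l * pi) \<longrightarrow>
              (\<forall>t\<ge>0. card (robots_in f g R pos P t) = l \<and>
                 (\<forall>r\<in>robots_in f g R pos P t. \<forall>x. shift_run c n E f g x t (pos r t) \<longrightarrow>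
                    (\<forall>s. 0 < s \<and> s < 1 \<longrightarrow> pt f g (x (t + s)) (t + s) \<notin> robot_points f g R pos t) \<and>
                    pt f g (x (t + 1)) (t + 1) \<in> robot_points f g R pos t)))"
    proof (rule impI, rule allI, rule allI, rule impI, rule allI, rule impI)
      fix P and l :: nat and t :: real
      assume "init ` R = {..<n}" "is_ring c n E f g P \<and> l > 0 \<and> ring_length c n E f g P (2 * real l * pi)" "0 \<le> t"
      then show "card (robots_in f g R pos P t) = l \<and>
                 (\<forall>r\<in>robots_in f g R pos P t. \<forall>x. shift_run c n E f g x t (pos r t) \<longrightarrow>
                    (\<forall>s. 0 < s \<and> s < 1 \<longrightarrow> pt f g (x (t + s)) (t + s) \<notin> robot_points f g R pos t) \<and>
                    pt f g (x (t + 1)) (t + 1) \<in> robot_points f g R pos t)"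
        using part3[of P l t] by blast
    qed
  qed
qed

end
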